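(* Let $H$ be a complex Hilbert space and $\{\mathcal{U}(t)\}_{t\geq 0}$ a strongly continuous semigroup on $H$ with generator $\mathcal{L}$. Let $z\in D(\mathcal{L}^\dagger)$ with $z\neq0$, $\mathcal{P}:=(\cdot,z)(z,z)^{-1}z$, $\mathcal{Q}:=1-\mathcal{P}$. For $x\in H$ let $f(x,\cdot):\mathbb{R}_+\to\mathbb{C}$ be the unique continuous solution of $$f(x,t)=(\mathcal{U}(t)\mathcal{Q}x,\mathcal{Q}\mathcal{L}^\dagger z)(z,z)^{-1}-\int_0^tf(x,t-s)\,(\mathcal{U}(s)z,\mathcal{Q}\mathcal{L}^\dagger z)(z,z)^{-1}\,ds,$$ and define $u(x,t):=\mathcal{P}x+\mathcal{U}(t)\mathcal{Q}x-\int_0^tf(x,t-s)\,\mathcal{U}(s)z\,ds$. Then $\overline{\mathcal{QL}}\mathcal{Q}=\mathcal{QLQ}$, and this operator generates the strongly continuous semigroup $\{\mathcal{G}(t):=u(\cdot,t)\}_{t\ge0}$.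
   Context: The scalar product $(\cdot,\cdot)$ on $H$ is conjugate-linear in its second argument. The generator is $\mathcal{L}x:=\lim_{h\searrow 0}\frac1h[\mathcal{U}(h)x-x]$ on the set $D(\mathcal{L})$ where the limit exists; $\dagger$ denotes the adjoint, the overbar the closure. Operator products carry natural domains: $D(\mathcal{QLQ})=\{x:\mathcal{Q}x\in D(\mathcal{L})\}$, $D(\overline{\mathcal{QL}}\mathcal{Q})=\{x:\mathcal{Q}x\in D(\overline{\mathcal{QL}})\}$. Integrals are Bochner integrals. *)

theory Defs
  imports "HOL-Analysis.Analysis"
begin

class complex_hilbert = banach +
  fixes scaleC :: "complex \<Rightarrow> 'a \<Rightarrow> 'a" (infixr "*\<^sub>C" 75)
    and cinner :: "'a \<Rightarrow> 'a \<Rightarrow> complex"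
  assumes scaleC_add_right: "a *\<^sub>C (x + y) = a *\<^sub>C x + a *\<^sub>C y"
    and scaleC_add_left: "(a + b) *\<^sub>C x = a *\<^sub>C x + b *\<^sub>C x"
    and scaleC_scaleC: "a *\<^sub>C (b *\<^sub>C x) = (a * b) *\<^sub>C x"
    and scaleC_one: "1 *\<^sub>C x = x"
    and scaleR_scaleC: "scaleR r x = complex_of_real r *\<^sub>C x"
    and cinner_add_left: "cinner (x + y) z = cinner x z + cinner y z"
    and cinner_scaleC_left: "cinner (a *\<^sub>C x) y = a * cinner x y"
    and cinner_commute: "cinner x y = cnj (cinner y x)"
    and cinner_self_norm: "cinner x x = complex_of_real ((norm x)\<^sup>2)"

definition bounded_clin :: "('a::complex_hilbert \<Rightarrow> 'a) \<Rightarrow> bool" where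
  "bounded_clin T \<longleftrightarrow> (\<forall>x y. T (x + y) = T x + T y) \<and> (\<forall>a x. T (a *\<^sub>C x) = a *\<^sub>C T x)
     \<and> (\<exists>K. \<forall>x. norm (T x) \<le> K * norm x)"

text \<open>Strongly continuous semigroup {U(t)}, t \<ge> 0 (values at negative t are irrelevant).\<close>
definition c0_semigroup :: "(real \<Rightarrow> 'a::complex_hilbert \<Rightarrow> 'a) \<Rightarrow> bool" where
  "c0_semigroup U \<longleftrightarrow> (\<forall>t\<ge>0. bounded_clin (U t)) \<and> U 0 = id
     \<and> (\<forall>s\<ge>0. \<forall>t\<ge>0. U (s + t) = U s \<circ> U t)
     \<and> (\<forall>x. ((\<lambda>t. U t x) \<longlongrightarrow> x) (at_right 0))"

definition gen_dom :: "(real \<Rightarrow> 'a::complex_hilbert \<Rightarrow> 'a) \<Rightarrow> 'a set" where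
  "gen_dom U = {x. \<exists>l. ((\<lambda>h. scaleR (1 / h) (U h x - x)) \<longlongrightarrow> l) (at_right 0)}"

definition gen :: "(real \<Rightarrow> 'a::complex_hilbert \<Rightarrow> 'a) \<Rightarrow> 'a \<Rightarrow> 'a" where
  "gen U x = Lim (at_right 0) (\<lambda>h. scaleR (1 / h) (U h x - x))"

definition adj_dom :: "'a::complex_hilbert set \<Rightarrow> ('a \<Rightarrow> 'a) \<Rightarrow> 'a set" where
  "adj_dom D A = {y. \<exists>w. \<forall>x\<in>D. cinner (A x) y = cinner x w}"

definition adj :: "'a::complex_hilbert set \<Rightarrow> ('a \<Rightarrow> 'a) \<Rightarrow> 'a \<Rightarrow> 'a" where
  "adj D A y = (THE w. \<forall>x\<in>D. cinner (A x) y = cinner x w)"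

definition op_graph :: "'a::complex_hilbert set \<Rightarrow> ('a \<Rightarrow> 'a) \<Rightarrow> ('a \<times> 'a) set" where
  "op_graph D A = {(x, A x) | x. x \<in> D}"

definition closable :: "'a::complex_hilbert set \<Rightarrow> ('a \<Rightarrow> 'a) \<Rightarrow> bool" where
  "closable D A \<longleftrightarrow> (\<forall>x y y'. (x, y) \<in> closure (op_graph D A) \<and> (x, y') \<in> closure (op_graph D A) \<longrightarrow> y = y')"

definition op_closure_dom :: "'a::complex_hilbert set \<Rightarrow> ('a \<Rightarrow> 'a) \<Rightarrow> 'a set" where
  "op_closure_dom D A = {x. \<exists>y. (x, y) \<in> closure (op_graph D A)}"

definition op_closure :: "'a::complex_hilbert set \<Rightarrow> ('a \<Rightarrow> 'a) \<Rightarrow> 'a \<Rightarrow> 'a" where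
  "op_closure D A x = (THE y. (x, y) \<in> closure (op_graph D A))"

end

theory Submission
  imports Defs
begin


lemma cinner_add_right: "cinner (x::'a::complex_hilbert) (y + z) = cinner x y + cinner x z"
  by (metis cinner_commute cinner_add_left complex_cnj_add)

lemma cinner_scaleC_right: "cinner x (a *\<^sub>C y) = cnj a * cinner x y"
  by (metis cinner_commute cinner_scaleC_left complex_cnj_mult complex_cnj_cnj)

lemma cinner_zero_left[simp]: "cinner 0 y = 0"
  using cinner_add_left[of 0 0 y] by simp

lemma cinner_zero_right[simp]: "cinner x 0 = 0"
  using cinner_add_right[of x 0 0] by simp

lemma cinner_minus_left: "cinner (- x) y = - cinner x y"
  using cinner_add_left[of x "-x" y] by (metis minus_unique add.right_inverse cinner_zero_left)

lemma cinner_diff_left: "cinner (x - y) z = cinner x z - cinner y z"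
  using cinner_add_left[of x "-y" z] cinner_minus_left[of y z] by simp

lemma cinner_minus_right: "cinner x (- y) = - cinner x y"
  by (metis cinner_commute cinner_minus_left complex_cnj_minus)

lemma cinner_diff_right: "cinner x (y - z) = cinner x y - cinner x z"
  using cinner_add_right[of x y "-z"] cinner_minus_right[of x z] by simp

lemma scaleC_zero_right[simp]: "a *\<^sub>C 0 = 0"
  using scaleC_add_right[of a 0 0] by simp

lemma scaleC_zero_left[simp]: "0 *\<^sub>C x = 0"
  using scaleR_scaleC[of 0 x] by (metis of_real_0 scale_zero_left)

lemma scaleC_minus_right: "a *\<^sub>C (- x) = - (a *\<^sub>C x)"
  using scaleC_add_right[of a x "-x"] by (metis minus_unique add.right_inverse scaleC_zero_right)

lemma scaleC_diff_right: "a *\<^sub>C (x - y) = a *\<^sub>C x - a *\<^sub>C y"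
  using scaleC_add_right[of a x "-y"] scaleC_minus_right[of a y] by simp

lemma scaleC_minus_left: "(- a) *\<^sub>C x = - (a *\<^sub>C x)"
  using scaleC_add_left[of a "-a" x] by (metis minus_unique add.right_inverse scaleC_zero_left)

lemma scaleC_diff_left: "(a - b) *\<^sub>C x = a *\<^sub>C x - b *\<^sub>C x"
  using scaleC_add_left[of a "-b" x] scaleC_minus_left[of b x] by simp

lemma scaleC_of_real: "complex_of_real r *\<^sub>C x = r *\<^sub>R x"
  by (simp add: scaleR_scaleC)

lemma scaleC_scaleR_comm: "a *\<^sub>C (r *\<^sub>R x) = r *\<^sub>R (a *\<^sub>C x)"
  by (simp add: scaleR_scaleC scaleC_scaleC mult.commute)

lemma cinner_self_eq_zero: "cinner x x = 0 \<longleftrightarrow> x = 0"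
  by (simp add: cinner_self_norm)

lemma norm_sq_cinner: "(norm x)\<^sup>2 = Re (cinner x x)"
  by (simp add: cinner_self_norm)

lemma norm_scaleC: "norm (a *\<^sub>C x) = cmod a * norm x"
proof -
  have "cinner (a *\<^sub>C x) (a *\<^sub>C x) = (a * cnj a) * cinner x x"
    by (simp add: cinner_scaleC_left cinner_scaleC_right mult.assoc)
  also have "a * cnj a = complex_of_real ((cmod a)\<^sup>2)"
    by (rule complex_norm_square[symmetric])
  finally have "complex_of_real ((norm (a *\<^sub>C x))\<^sup>2) = complex_of_real ((cmod a)\<^sup>2) * complex_of_real ((norm x)\<^sup>2)"
    by (simp only: cinner_self_norm)
  then have "(norm (a *\<^sub>C x))\<^sup>2 = (cmod a)\<^sup>2 * (norm x)\<^sup>2"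
    by (simp only: of_real_mult[symmetric] of_real_eq_iff)
  then have "(norm (a *\<^sub>C x))\<^sup>2 = (cmod a * norm x)\<^sup>2"
    by (simp add: power_mult_distrib)
  then show ?thesis
    by (simp add: power2_eq_iff_nonneg)
qed

lemma cauchy_schwarz: "cmod (cinner x y) \<le> norm x * norm y"
proof (cases "y = 0")
  case True then show ?thesis by simp
next
  case False
  define c where "c = cinner y y"
  define t where "t = cinner x y / c"
  have c0: "c \<noteq> 0" using False by (simp add: c_def cinner_self_eq_zero)
  have cre: "c = complex_of_real ((norm y)\<^sup>2)" by (simp add: c_def cinner_self_norm)
  have e: "cinner (x - t *\<^sub>C y) (x - t *\<^sub>C y) = cinner x x - cnj t * cinner x y - t * cinner y x + t * cnj t * c"
    by (simp add: cinner_diff_left cinner_diff_right cinner_scaleC_left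
        cinner_scaleC_right c_def algebra_simps)
  also have "\<dots> = cinner x x - cinner x y * cnj (cinner x y) / c"
    using c0 unfolding t_def
    by (simp add: cinner_commute[of y x] cre field_simps)
  finally have "0 \<le> Re (cinner x x - cinner x y * cnj (cinner x y) / c)"
    by (metis norm_sq_cinner zero_le_power2)
  also have "cinner x y * cnj (cinner x y) / c = complex_of_real ((cmod (cinner x y))\<^sup>2 / (norm y)\<^sup>2)"
  proof -
    have n: "cinner x y * cnj (cinner x y) = complex_of_real ((cmod (cinner x y))\<^sup>2)"
      by (rule complex_norm_square[symmetric])
    show ?thesis by (simp only: n cre of_real_divide[symmetric])
  qed
  finally have "0 \<le> Re (cinner x x) - (cmod (cinner x y))\<^sup>2 / (norm y)\<^sup>2"
    by (simp only: Re_complex_of_real minus_complex.sel)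
  then have "(cmod (cinner x y))\<^sup>2 / (norm y)\<^sup>2 \<le> (norm x)\<^sup>2"
    by (simp only: norm_sq_cinner[symmetric])
  moreover have "0 < (norm y)\<^sup>2" using False by simp
  ultimately have "(cmod (cinner x y))\<^sup>2 \<le> (norm x)\<^sup>2 * (norm y)\<^sup>2"
    by (simp add: pos_divide_le_eq)
  then have "(cmod (cinner x y))\<^sup>2 \<le> (norm x * norm y)\<^sup>2"
    by (simp add: power_mult_distrib)
  then show ?thesis
    by (simp add: power2_le_iff_abs_le)
qed

lemma bounded_linear_cinner_left: "bounded_linear (\<lambda>x. cinner x y)"
proof (rule bounded_linear_intro[where K="norm y"])
  show "cinner (x + z) y = cinner x y + cinner z y" for x z by (rule cinner_add_left)
  show "cinner (r *\<^sub>R x) y = r *\<^sub>R cinner x y" for r x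
    by (simp add: scaleR_scaleC cinner_scaleC_left scaleR_conv_of_real)
  show "norm (cinner x y) \<le> norm x * norm y" for x by (rule cauchy_schwarz)
qed

lemma bounded_linear_cinner_right: "bounded_linear (\<lambda>y. cinner x y)"
proof -
  have "bounded_linear (\<lambda>y. cnj (cinner y x))"
    using bounded_linear_compose[OF bounded_linear_cnj bounded_linear_cinner_left[of x]] by (simp add: o_def)
  then show ?thesis by (simp add: cinner_commute[of x])
qed

lemma bounded_linear_scaleC_right: "bounded_linear (\<lambda>x. a *\<^sub>C x)"
proof (rule bounded_linear_intro[where K="cmod a"])
  show "a *\<^sub>C (x + y) = a *\<^sub>C x + a *\<^sub>C y" for x y by (rule scaleC_add_right)
  show "a *\<^sub>C (r *\<^sub>R x) = r *\<^sub>R (a *\<^sub>C x)" for r x by (rule scaleC_scaleR_comm)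
  show "norm (a *\<^sub>C x) \<le> norm x * cmod a" for x by (simp add: norm_scaleC mult.commute)
qed

lemma bounded_linear_scaleC_left: "bounded_linear (\<lambda>a. a *\<^sub>C x)"
proof (rule bounded_linear_intro[where K="norm x"])
  show "(a + b) *\<^sub>C x = a *\<^sub>C x + b *\<^sub>C x" for a b by (rule scaleC_add_left)
  show "(r *\<^sub>R a) *\<^sub>C x = r *\<^sub>R (a *\<^sub>C x)" for r a
    by (simp add: scaleR_conv_of_real scaleC_scaleC[symmetric] scaleC_of_real)
  show "norm (a *\<^sub>C x) \<le> norm a * norm x" for a by (simp add: norm_scaleC)
qed

lemma tendsto_scaleC[tendsto_intros]:
  assumes "(f \<longlongrightarrow> a) F" "(g \<longlongrightarrow> b) F"
  shows "((\<lambda>t. f t *\<^sub>C g t) \<longlongrightarrow> a *\<^sub>C b) F"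
proof -
  have "bounded_bilinear (\<lambda>a x. a *\<^sub>C x)"
  proof (rule bounded_bilinear.intro)
    show "(a + a') *\<^sub>C b = a *\<^sub>C b + a' *\<^sub>C b" for a a' b by (rule scaleC_add_left)
    show "a *\<^sub>C (b + b') = a *\<^sub>C b + a *\<^sub>C b'" for a b b' by (rule scaleC_add_right)
    show "(r *\<^sub>R a) *\<^sub>C b = r *\<^sub>R (a *\<^sub>C b)" for r a b
      by (simp add: scaleR_conv_of_real scaleC_scaleC[symmetric] scaleC_of_real)
    show "a *\<^sub>C (r *\<^sub>R b) = r *\<^sub>R (a *\<^sub>C b)" for r a b by (rule scaleC_scaleR_comm)
    show "\<exists>K. \<forall>a b. norm (a *\<^sub>C b) \<le> norm a * norm b * K"
      by (rule exI[of _ 1]) (simp add: norm_scaleC)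
  qed
  then show ?thesis using bounded_bilinear.tendsto assms by blast
qed

lemma tendsto_cinner[tendsto_intros]:
  assumes "(f \<longlongrightarrow> a) F" "(g \<longlongrightarrow> b) F"
  shows "((\<lambda>t. cinner (f t) (g t)) \<longlongrightarrow> cinner a b) F"
proof -
  have "bounded_bilinear (\<lambda>a x. cinner a x)"
  proof (rule bounded_bilinear.intro)
    show "cinner (a + a') b = cinner a b + cinner a' b" for a a' b by (rule cinner_add_left)
    show "cinner a (b + b') = cinner a b + cinner a b'" for a b b' by (rule cinner_add_right)
    show "cinner (r *\<^sub>R a) b = r *\<^sub>R (cinner a b)" for r a b
      by (simp add: scaleR_scaleC cinner_scaleC_left scaleR_conv_of_real)
    show "cinner a (r *\<^sub>R b) = r *\<^sub>R (cinner a b)" for r a b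
      by (simp add: scaleR_scaleC cinner_scaleC_right scaleR_conv_of_real)
    show "\<exists>K. \<forall>a b. norm (cinner a b) \<le> norm a * norm b * K"
      by (rule exI[of _ 1]) (simp add: cauchy_schwarz)
  qed
  then show ?thesis using bounded_bilinear.tendsto assms by blast
qed

lemma continuous_on_scaleC[continuous_intros]:
  "continuous_on S f \<Longrightarrow> continuous_on S g \<Longrightarrow> continuous_on S (\<lambda>t. f t *\<^sub>C g t)"
  unfolding continuous_on_def by (auto intro!: tendsto_scaleC)

lemma continuous_on_cinner[continuous_intros]:
  "continuous_on S f \<Longrightarrow> continuous_on S g \<Longrightarrow> continuous_on S (\<lambda>t. cinner (f t) (g t))"
  unfolding continuous_on_def by (auto intro!: tendsto_cinner)

lemma bounded_clin_linear:
  assumes "bounded_clin T"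
  shows "bounded_linear T"
proof -
  from assms obtain K where add: "\<And>x y. T (x + y) = T x + T y"
    and sc: "\<And>a x. T (a *\<^sub>C x) = a *\<^sub>C T x" and K: "\<And>x. norm (T x) \<le> K * norm x"
    unfolding bounded_clin_def by blast
  show ?thesis
  proof (rule bounded_linear_intro[where K=K])
    show "T (x + y) = T x + T y" for x y by (rule add)
    show "T (r *\<^sub>R x) = r *\<^sub>R T x" for r x using sc[of "complex_of_real r" x] by (simp add: scaleC_of_real)
    show "norm (T x) \<le> norm x * K" for x using K[of x] by (simp add: mult.commute)
  qed
qed

lemma bounded_clin_scaleC:
  "bounded_clin T \<Longrightarrow> T (a *\<^sub>C x) = a *\<^sub>C T x"
  unfolding bounded_clin_def by blast

lemma vderiv_quot_right:
  fixes f :: "real \<Rightarrow> 'b::real_normed_vector"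
  assumes der: "(f has_vector_derivative D) (at x within {x..b})" and xb: "x < b"
  shows "((\<lambda>h. (1/h) *\<^sub>R (f (x + h) - f x)) \<longlongrightarrow> D) (at_right 0)"
proof -
  have "(f has_vector_derivative D) (at_right x)"
    using der at_within_Icc_at_right[OF xb] by simp
  then have lim: "((\<lambda>y. (1 / norm (y - x)) *\<^sub>R (f y - (f x + (y - x) *\<^sub>R D))) \<longlongrightarrow> 0) (at_right x)"
    unfolding has_vector_derivative_def has_derivative_within by auto
  have ev: "eventually (\<lambda>y. (1 / norm (y - x)) *\<^sub>R (f y - (f x + (y - x) *\<^sub>R D)) =
      (1/(y - x)) *\<^sub>R (f y - f x) - D) (at_right x)"
    using eventually_at_right_less[of x]
  proof (rule eventually_mono)
    fix y assume "x < y"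
    then have "y - x \<noteq> 0" by simp
    then show "(1 / norm (y - x)) *\<^sub>R (f y - (f x + (y - x) *\<^sub>R D)) = (1/(y - x)) *\<^sub>R (f y - f x) - D"
      using \<open>x < y\<close> by (simp add: scaleR_diff_right scaleR_add_right)
  qed
  have "((\<lambda>y. (1/(y - x)) *\<^sub>R (f y - f x) - D) \<longlongrightarrow> 0) (at_right x)"
    using tendsto_cong[OF ev] lim by simp
  then have "((\<lambda>y. (1/(y - x)) *\<^sub>R (f y - f x)) \<longlongrightarrow> D) (at_right x)"
    by (simp add: LIM_zero_iff)
  then show ?thesis
    by (subst (asm) filterlim_at_right_to_0) (simp add: add.commute)
qed

lemma gronwall:
  fixes g :: "real \<Rightarrow> real"
  assumes cont: "continuous_on {0..T} g"
    and le: "\<And>t. t \<in> {0..T} \<Longrightarrow> g t \<le> a + K * integral {0..t} g"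
    and K: "K \<ge> 0"
    and t: "t \<in> {0..T}"
  shows "g t \<le> a * exp (K * t)"
proof -
  define F where "F s = integral {0..s} g" for s
  define D where "D s = exp (- K * s) * (a + K * F s)" for s
  have Fder: "(F has_real_derivative g s) (at s within {0..T})" if "s \<in> {0..T}" for s
    unfolding F_def by (rule integral_has_real_derivative[OF cont that])
  have Dder: "(D has_real_derivative exp (- K * s) * K * (g s - a - K * F s)) (at s within {0..T})"
    if "s \<in> {0..T}" for s
  proof -
    have e: "((\<lambda>s. exp (- K * s)) has_real_derivative (exp (- K * s) * (- K))) (at s within {0..T})"
      by (auto intro!: derivative_eq_intros)
    have l: "((\<lambda>s. a + K * F s) has_real_derivative (K * g s)) (at s within {0..T})"
      by (auto intro!: derivative_eq_intros Fder[OF that])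
    show ?thesis
      unfolding D_def using DERIV_mult[OF e l] by (simp add: algebra_simps)
  qed
  have Dcont: "continuous_on {0..T} D"
    using Dder by (meson DERIV_continuous continuous_on_eq_continuous_within)
  have "D t \<le> D 0"
  proof (rule DERIV_nonpos_imp_decreasing_open[where f=D and a=0 and b=t])
    show "0 \<le> t" using t by simp
    show "continuous_on {0..t} D" using Dcont t by (auto intro: continuous_on_subset)
    fix s assume s: "0 < s" "s < t"
    then have sT: "s \<in> {0..T}" using t by auto
    have "at s within {0..T} = at s" using s t by (intro at_within_Icc_at) auto
    then have "DERIV D s :> exp (- K * s) * K * (g s - a - K * F s)" using Dder[OF sT] by simp
    moreover have "exp (- K * s) * K * (g s - a - K * F s) \<le> 0"
      using le[OF sT] K by (simp add: F_def mult_nonneg_nonpos)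
    ultimately show "\<exists>y. DERIV D s :> y \<and> y \<le> 0" by blast
  qed
  then have "exp (- K * t) * (a + K * F t) \<le> a" by (simp add: D_def F_def)
  then have "a + K * F t \<le> a * exp (K * t)"
    by (simp add: exp_minus field_simps)
  then show ?thesis using le[OF t] by (simp add: F_def)
qed

lemma integral_flip:
  fixes h :: "real \<Rightarrow> 'b::banach"
  shows "integral {0..t} (\<lambda>s. h (t - s)) = integral {0..t} h"
proof -
  have "integral {0..t} (\<lambda>s. h (t - s)) = integral {-t..0} (\<lambda>s. h (t + s))"
    using Henstock_Kurzweil_Integration.integral_reflect_real[of 0 "-t" "\<lambda>s. h (t + s)"] by simp
  also have "\<dots> = integral {-t + t..0 + t} h"
    using integral_shift_Icc_real[of "-t" 0 h t] by (simp add: o_def add.commute)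
  finally show ?thesis by simp
qed

locale c0sg =
  fixes U :: "real \<Rightarrow> 'a::complex_hilbert \<Rightarrow> 'a"
  assumes sg: "c0_semigroup U"
begin

lemma U_clin: "t \<ge> 0 \<Longrightarrow> bounded_clin (U t)"
  using sg unfolding c0_semigroup_def by blast

lemma U_lin: "t \<ge> 0 \<Longrightarrow> bounded_linear (U t)"
  using U_clin bounded_clin_linear by blast

lemma U_add: "t \<ge> 0 \<Longrightarrow> U t (x + y) = U t x + U t y"
  using U_lin linear_add bounded_linear.linear by blast

lemma U_diff: "t \<ge> 0 \<Longrightarrow> U t (x - y) = U t x - U t y"
  using U_lin linear_diff bounded_linear.linear by blast

lemma U_zero: "t \<ge> 0 \<Longrightarrow> U t 0 = 0"
  using U_lin linear_0 bounded_linear.linear by blast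

lemma U_scaleR: "t \<ge> 0 \<Longrightarrow> U t (r *\<^sub>R x) = r *\<^sub>R U t x"
  using U_lin linear_scale bounded_linear.linear by blast

lemma U_scaleC: "t \<ge> 0 \<Longrightarrow> U t (a *\<^sub>C x) = a *\<^sub>C U t x"
  using U_clin bounded_clin_scaleC by blast

lemma U_0: "U 0 x = x"
  using sg unfolding c0_semigroup_def by simp

lemma U_comp: "s \<ge> 0 \<Longrightarrow> t \<ge> 0 \<Longrightarrow> U (s + t) x = U s (U t x)"
  using sg unfolding c0_semigroup_def by simp

lemma U_right0: "((\<lambda>t. U t x) \<longlongrightarrow> x) (at_right 0)"
  using sg unfolding c0_semigroup_def by blast

lemma U_cont_x: "t \<ge> 0 \<Longrightarrow> (g \<longlongrightarrow> a) F \<Longrightarrow> ((\<lambda>n. U t (g n)) \<longlongrightarrow> U t a) F"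
  using U_lin bounded_linear.tendsto by blast

subsection \<open>Local boundedness via Baire\<close>

lemma local_bound: "\<exists>d>0. \<exists>M\<ge>1. \<forall>t\<in>{0..d}. \<forall>x. norm (U t x) \<le> M * norm x"
proof -
  define E where "E n = {x. \<forall>t\<in>{0..1 / real (Suc n)}. norm (U t x) \<le> real (Suc n)}" for n
  have closedE: "closed (E n)" for n
  proof -
    have "E n = (\<Inter>t\<in>{0..1 / real (Suc n)}. {x. norm (U t x) \<le> real (Suc n)})"
      unfolding E_def by auto
    moreover have "closed {x. norm (U t x) \<le> real (Suc n)}" if "t \<in> {0..1 / real (Suc n)}" for t
    proof -
      have "continuous_on UNIV (U t)" using that U_lin linear_continuous_on by auto
      then show ?thesis
        by (intro closed_Collect_le continuous_on_norm) (auto intro: continuous_on_const)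
    qed
    ultimately show ?thesis by auto
  qed
  have coverE: "\<exists>n. x \<in> E n" for x
  proof -
    have "eventually (\<lambda>t. dist (U t x) x < 1) (at_right 0)"
      using U_right0[of x] tendstoD by fastforce
    then obtain b where b: "b > 0" "\<And>t. 0 < t \<Longrightarrow> t < b \<Longrightarrow> dist (U t x) x < 1"
      unfolding eventually_at_right_field by auto
    obtain n1 :: nat where n1: "1 / b < real n1" using reals_Archimedean2 by blast
    obtain n2 :: nat where n2: "norm x + 1 < real n2" using reals_Archimedean2 by blast
    define n where "n = n1 + n2"
    have "x \<in> E n"
      unfolding E_def
    proof (intro CollectI ballI)
      fix t assume t: "t \<in> {0..1 / real (Suc n)}"
      have "1 / real (Suc n) < b"
      proof -
        have "0 \<le> b * real n2" using b(1) by simp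
        moreover have "1 < b * real n1" using n1 b(1) by (simp add: field_simps)
        ultimately have "1 < b + (b * real n1 + b * real n2)" using b(1) by linarith
        then show ?thesis using b(1) by (simp add: n_def field_simps)
      qed
      show "norm (U t x) \<le> real (Suc n)"
      proof (cases "t = 0")
        case True then show ?thesis using n2 by (simp add: U_0 n_def)
      next
        case False
        with t have "0 < t" "t < b" using \<open>1 / real (Suc n) < b\<close> by auto
        then have "dist (U t x) x < 1" by (rule b(2))
        then have "norm (U t x - x) \<le> 1" by (simp add: dist_norm)
        then have "norm (U t x) \<le> norm x + 1"
          using norm_triangle_ineq2[of "U t x" x] by simp
        then show ?thesis using n2 by (simp add: n_def)
      qed
    qed
    then show ?thesis by blast
  qed
  have "\<exists>n. interior (E n) \<noteq> {}"
  proof (rule ccontr)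
    assume "\<not> ?thesis"
    then have "euclidean interior_of (\<Union>(range E)) = {}"
      by (intro Baire_category_alt)
        (auto simp: completely_metrizable_space_euclidean closed_closedin[symmetric] closedE)
    moreover have "\<Union>(range E) = UNIV" using coverE by auto
    ultimately show False by simp
  qed
  then obtain n x0 where "x0 \<in> interior (E n)" by blast
  then obtain r where r: "r > 0" "ball x0 r \<subseteq> E n"
    by (meson mem_interior)
  define M where "M = max 1 (4 * real (Suc n) / r)"
  have bnd: "norm (U t y) \<le> M * norm y" if t: "t \<in> {0..1 / real (Suc n)}" for t y
  proof (cases "y = 0")
    case True then show ?thesis using t by (simp add: U_zero)
  next
    case False
    define v where "v = (r / 2 / norm y) *\<^sub>R y"
    have nv: "norm v = r / 2" using False r by (simp add: v_def)
    have "x0 + v \<in> E n" using r nv by (intro subsetD[OF r(2)]) (simp add: dist_norm)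
    moreover have "x0 \<in> E n" using r by (intro subsetD[OF r(2)]) simp
    ultimately have a: "norm (U t (x0 + v)) \<le> real (Suc n)" "norm (U t x0) \<le> real (Suc n)"
      using t unfolding E_def by auto
    have "U t v = U t (x0 + v) - U t x0" using t by (simp add: U_add)
    then have "norm (U t v) \<le> 2 * real (Suc n)"
      using a norm_triangle_ineq4[of "U t (x0 + v)" "U t x0"] by simp
    moreover have "U t v = (r / 2 / norm y) *\<^sub>R U t y" using t by (simp add: v_def U_scaleR)
    ultimately have "(r / 2 / norm y) * norm (U t y) \<le> 2 * real (Suc n)"
      using r by simp
    then have "norm (U t y) \<le> (4 * real (Suc n) / r) * norm y"
      using r False by (simp add: field_simps)
    also have "\<dots> \<le> M * norm y" unfolding M_def by (intro mult_right_mono) auto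
    finally show ?thesis .
  qed
  show ?thesis
    by (rule exI[of _ "1 / real (Suc n)"], simp, rule exI[of _ M]) (use bnd in \<open>auto simp: M_def\<close>)
qed

lemma bound: "\<exists>M\<ge>1. \<forall>t\<in>{0..T}. \<forall>x. norm (U t x) \<le> M * norm x"
proof -
  obtain d M where d: "d > 0" and M: "M \<ge> 1" and dM: "\<And>t x. t \<in> {0..d} \<Longrightarrow> norm (U t x) \<le> M * norm x"
    using local_bound by blast
  have ind: "\<forall>t\<in>{0..real k * d}. \<forall>x. norm (U t x) \<le> M ^ (Suc k) * norm x" for k
  proof (induction k)
    case 0
    have "norm x \<le> M * norm x" for x using M mult_right_mono[of 1 M "norm x"] by simp
    then show ?case by (auto simp: U_0)
  next
    case (Suc k)
    show ?case
    proof (intro ballI allI)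
      fix t x assume t: "t \<in> {0..real (Suc k) * d}"
      show "norm (U t x) \<le> M ^ Suc (Suc k) * norm x"
      proof (cases "t \<le> d")
        case True
        then have "norm (U t x) \<le> M * norm x" using t by (intro dM) auto
        also have "\<dots> \<le> M ^ Suc (Suc k) * norm x"
          using M by (intro mult_right_mono) (auto simp: power_increasing[of 1 "Suc (Suc k)" M, simplified])
        finally show ?thesis .
      next
        case False
        then have tt: "t - d \<in> {0..real k * d}" using t by (auto simp: algebra_simps)
        have "U t x = U d (U (t - d) x)" using U_comp[of d "t - d" x] False d by simp
        then have "norm (U t x) \<le> M * norm (U (t - d) x)" using d by (simp add: dM)
        also have "\<dots> \<le> M * (M ^ Suc k * norm x)"
          using Suc tt M by (intro mult_left_mono) auto
        finally show ?thesis by (simp add: mult.assoc)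
      qed
    qed
  qed
  obtain k :: nat where k: "T / d < real k" using reals_Archimedean2 by blast
  then have "T \<le> real k * d" using d by (simp add: field_simps)
  then have "\<forall>t\<in>{0..T}. \<forall>x. norm (U t x) \<le> M ^ Suc k * norm x" using ind[of k] by auto
  moreover have "M ^ Suc k \<ge> 1" using M one_le_power by blast
  ultimately show ?thesis by blast
qed

subsection \<open>Strong continuity\<close>

lemma right_lim: assumes "t0 \<ge> 0" shows "((\<lambda>t. U t x) \<longlongrightarrow> U t0 x) (at_right t0)"
proof -
  have "((\<lambda>h. U t0 (U h x)) \<longlongrightarrow> U t0 x) (at_right 0)"
    using U_cont_x[OF assms U_right0] .
  moreover have "eventually (\<lambda>h. U t0 (U h x) = U (h + t0) x) (at_right 0)"
    using eventually_at_right_less[of 0]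
  proof eventually_elim
    case (elim h)
    then show ?case using U_comp[of t0 h x] assms by (simp add: add.commute)
  qed
  ultimately have "((\<lambda>h. U (h + t0) x) \<longlongrightarrow> U t0 x) (at_right 0)"
    by (rule Lim_transform_eventually)
  then show ?thesis by (simp add: filterlim_at_right_to_0[of _ _ t0])
qed

lemma left_lim: assumes "t0 > 0" shows "((\<lambda>t. U t x) \<longlongrightarrow> U t0 x) (at_left t0)"
proof -
  obtain M where M: "M \<ge> 1" "\<And>t x. t \<in> {0..t0} \<Longrightarrow> norm (U t x) \<le> M * norm x"
    using bound[of t0] by blast
  have "((\<lambda>h. U h x - x) \<longlongrightarrow> 0) (at_right 0)" using U_right0 by (simp add: LIM_zero_iff)
  then have lim1: "((\<lambda>h. M * norm (U h x - x)) \<longlongrightarrow> 0) (at_right 0)"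
    using tendsto_mult_right_zero tendsto_norm_zero by blast
  have ev1: "eventually (\<lambda>h. norm (U (t0 - h) x - U t0 x) \<le> M * norm (U h x - x)) (at_right 0)"
    using eventually_at_right_real[OF assms]
  proof eventually_elim
    case (elim h)
    then have "U t0 x = U (t0 - h) (U h x)" using U_comp[of "t0 - h" h x] by simp
    then have "U (t0 - h) x - U t0 x = U (t0 - h) (x - U h x)" using elim by (simp add: U_diff)
    then have "norm (U (t0 - h) x - U t0 x) \<le> M * norm (x - U h x)" using elim M(2)[of "t0 - h"] by simp
    then show ?case by (simp add: norm_minus_commute)
  qed
  have "((\<lambda>h. U (t0 - h) x - U t0 x) \<longlongrightarrow> 0) (at_right 0)"
    by (rule Lim_null_comparison[OF ev1 lim1])
  then have "((\<lambda>h. U (t0 - h) x) \<longlongrightarrow> U t0 x) (at_right 0)" by (simp add: LIM_zero_iff)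
  then have "((\<lambda>h. U (- (h + - t0)) x) \<longlongrightarrow> U t0 x) (at_right 0)" by simp
  then show ?thesis
    by (simp add: filterlim_at_left_to_right filterlim_at_right_to_0[of _ _ "-t0"])
qed

lemma U_cont: "continuous_on {0..} (\<lambda>t. U t x)"
  unfolding continuous_on_def
proof (intro ballI)
  fix t0 :: real assume "t0 \<in> {0..}"
  then have t0: "t0 \<ge> 0" by simp
  show "((\<lambda>t. U t x) \<longlongrightarrow> U t0 x) (at t0 within {0..})"
  proof (cases "t0 = 0")
    case True
    then show ?thesis using right_lim[of 0] by (simp add: at_within_Ici_at_right)
  next
    case False
    then have "((\<lambda>t. U t x) \<longlongrightarrow> U t0 x) (at t0)"
      using t0 left_lim right_lim by (simp add: at_eq_sup_left_right filterlim_sup)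
    then show ?thesis by (rule tendsto_within_subset) simp
  qed
qed

lemma U_cont_on: "S \<subseteq> {0..} \<Longrightarrow> continuous_on S (\<lambda>t. U t x)"
  using U_cont continuous_on_subset by blast

lemma U_integrable: "(\<lambda>t. U t x) integrable_on {a..b}" if "a \<ge> 0"
  using that by (intro integrable_continuous_real U_cont_on) auto

end

context c0sg
begin

definition J where "J h b = integral {0..h} (\<lambda>s. U s b)"

lemma J_has: "h \<ge> 0 \<Longrightarrow> ((\<lambda>s. U s b) has_integral J h b) {0..h}"
  unfolding J_def using U_integrable[where a=0 and b=h and x=b] by (simp add: integrable_integral)

lemma J_0: "J 0 b = 0"
  unfolding J_def by simp

lemma J_lin: assumes h: "h \<ge> 0" shows "bounded_linear (J h)"
proof -
  obtain M where M: "M \<ge> 1" "\<And>t x. t \<in> {0..h} \<Longrightarrow> norm (U t x) \<le> M * norm x"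
    using bound[of h] by blast
  show ?thesis
  proof (rule bounded_linear_intro[where K="M * h"])
    fix x y
    have "J h (x + y) = integral {0..h} (\<lambda>s. U s x + U s y)"
      unfolding J_def by (rule integral_cong) (simp add: U_add)
    also have "\<dots> = J h x + J h y"
      unfolding J_def by (rule integral_add) (auto intro: U_integrable)
    finally show "J h (x + y) = J h x + J h y" .
  next
    fix r x
    have "J h (r *\<^sub>R x) = integral {0..h} (\<lambda>s. r *\<^sub>R U s x)"
      unfolding J_def by (rule integral_cong) (simp add: U_scaleR)
    also have "\<dots> = r *\<^sub>R J h x"
      unfolding J_def by simp
    finally show "J h (r *\<^sub>R x) = r *\<^sub>R J h x" .
  next
    fix x
    have "norm (J h x) \<le> (M * norm x) * (h - 0)"
      unfolding J_def by (rule integral_bound) (use h M in \<open>auto intro: U_cont_on\<close>)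
    then show "norm (J h x) \<le> norm x * (M * h)" by (simp add: algebra_simps)
  qed
qed

lemma J_U_shift: assumes "h \<ge> 0" "e \<ge> 0" shows "U e (J h b) = integral {e..h+e} (\<lambda>s. U s b)"
proof -
  have "U e (J h b) = integral {0..h} (U e \<circ> (\<lambda>s. U s b))"
    unfolding J_def by (rule integral_linear[symmetric]) (use assms in \<open>auto intro: U_integrable U_lin\<close>)
  also have "\<dots> = integral {0..h} ((\<lambda>s. U s b) \<circ> (+) e)"
    by (rule integral_cong) (use assms in \<open>simp add: U_comp\<close>)
  also have "\<dots> = integral {0+e..h+e} (\<lambda>s. U s b)"
    by (rule integral_shift_Icc_real)
  finally show ?thesis by simp
qed

lemma J_U_comm: assumes "h \<ge> 0" "e \<ge> 0" shows "J h (U e b) = U e (J h b)"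
proof -
  have "J h (U e b) = integral {0..h} (U e \<circ> (\<lambda>s. U s b))"
    unfolding J_def
  proof (rule integral_cong)
    fix s assume "s \<in> {0..h}"
    then show "U s (U e b) = (U e \<circ> (\<lambda>s. U s b)) s"
      using assms U_comp[of s e b] U_comp[of e s b] by (simp add: add.commute)
  qed
  also have "\<dots> = U e (J h b)"
    unfolding J_def by (rule integral_linear) (use assms in \<open>auto intro: U_integrable U_lin\<close>)
  finally show ?thesis .
qed

lemma J_deriv: assumes "0 \<le> t" shows "((\<lambda>s. J s b) has_vector_derivative U t b) (at t within {t..t+1})"
proof -
  have "((\<lambda>s. J s b) has_vector_derivative U t b) (at t within {0..t+1})"
    unfolding J_def by (rule integral_has_vector_derivative) (use assms in \<open>auto intro: U_cont_on\<close>)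
  then show ?thesis by (rule has_vector_derivative_within_subset) (use assms in auto)
qed

lemma J_quot_lim: assumes "0 \<le> t" shows "((\<lambda>e. (1/e) *\<^sub>R (J (t + e) b - J t b)) \<longlongrightarrow> U t b) (at_right 0)"
  using vderiv_quot_right[OF J_deriv[OF assms]] by simp

lemma avg_lim: "((\<lambda>h. (1/h) *\<^sub>R J h b) \<longlongrightarrow> b) (at_right 0)"
  using J_quot_lim[of 0 b] by (simp add: J_0 U_0)

lemma J_quot: assumes h: "h \<ge> 0"
  shows "((\<lambda>e. (1/e) *\<^sub>R (U e (J h b) - J h b)) \<longlongrightarrow> U h b - b) (at_right 0)"
proof -
  have lim: "((\<lambda>e. (1/e) *\<^sub>R (J (h + e) b - J h b) - (1/e) *\<^sub>R (J (0 + e) b - J 0 b)) \<longlongrightarrow> U h b - U 0 b) (at_right 0)"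
    by (intro tendsto_diff J_quot_lim) (use h in auto)
  have "eventually (\<lambda>e. (1/e) *\<^sub>R (J (h + e) b - J h b) - (1/e) *\<^sub>R (J (0 + e) b - J 0 b) =
      (1/e) *\<^sub>R (U e (J h b) - J h b)) (at_right 0)"
    using eventually_at_right_less[of 0]
  proof eventually_elim
    case (elim e)
    have "J e b + integral {e..h+e} (\<lambda>s. U s b) = J (h + e) b"
      unfolding J_def by (rule Henstock_Kurzweil_Integration.integral_combine) (use h elim in \<open>auto intro: U_integrable\<close>)
    then have i: "integral {e..h+e} (\<lambda>s. U s b) = J (h + e) b - J e b" by (metis add_diff_cancel_left')
    have "U e (J h b) = J (h + e) b - J e b" using J_U_shift[OF h, of e b] elim i by simp
    then show ?case by (simp add: J_0 scaleR_diff_right)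
  qed
  from Lim_transform_eventually[OF lim this] show ?thesis by (simp add: U_0)
qed

lemma gen_dom_iff: "x \<in> gen_dom U \<longleftrightarrow> (\<exists>l. ((\<lambda>h. (1/h) *\<^sub>R (U h x - x)) \<longlongrightarrow> l) (at_right 0))"
  unfolding gen_dom_def by simp

lemma gen_tendsto: "x \<in> gen_dom U \<Longrightarrow> ((\<lambda>h. (1/h) *\<^sub>R (U h x - x)) \<longlongrightarrow> gen U x) (at_right 0)"
  unfolding gen_dom_def gen_def using tendsto_Lim[OF trivial_limit_at_right_real] by auto

lemma gen_eqI: "((\<lambda>h. (1/h) *\<^sub>R (U h x - x)) \<longlongrightarrow> l) (at_right 0) \<Longrightarrow> x \<in> gen_dom U \<and> gen U x = l"
  unfolding gen_dom_def gen_def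
  using tendsto_Lim[OF trivial_limit_at_right_real] tendsto_unique[OF trivial_limit_at_right_real] by blast

lemma J_dom: "h \<ge> 0 \<Longrightarrow> J h b \<in> gen_dom U \<and> gen U (J h b) = U h b - b"
  by (rule gen_eqI) (rule J_quot)

lemma J_gen: assumes h: "h \<ge> 0" and b: "b \<in> gen_dom U" shows "J h (gen U b) = U h b - b"
proof -
  have l1: "((\<lambda>e. J h ((1/e) *\<^sub>R (U e b - b))) \<longlongrightarrow> J h (gen U b)) (at_right 0)"
    using bounded_linear.tendsto[OF J_lin[OF h] gen_tendsto[OF b]] .
  have "eventually (\<lambda>e. (1/e) *\<^sub>R (U e (J h b) - J h b) = J h ((1/e) *\<^sub>R (U e b - b))) (at_right 0)"
    using eventually_at_right_less[of 0]
  proof eventually_elim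
    case (elim e)
    have l: "linear (J h)" using J_lin[OF h] bounded_linear.linear by blast
    show ?case using elim h by (simp add: linear_scale[OF l] linear_diff[OF l] J_U_comm)
  qed
  from Lim_transform_eventually[OF J_quot[OF h] this]
  have l2: "((\<lambda>e. J h ((1/e) *\<^sub>R (U e b - b))) \<longlongrightarrow> U h b - b) (at_right 0)" .
  show ?thesis using tendsto_unique[OF _ l1 l2] by simp
qed

lemma dom_dense: "closure (gen_dom U) = UNIV"
proof -
  have "b \<in> closure (gen_dom U)" for b
  proof (rule Lim_in_closed_set[OF closed_closure _ _ avg_lim])
    show "eventually (\<lambda>h. (1/h) *\<^sub>R J h b \<in> closure (gen_dom U)) (at_right 0)"
      using eventually_at_right_less[of 0]
    proof eventually_elim
      case (elim h)
      have l: "linear (J h)" using J_lin[of h] elim by (simp add: bounded_linear.linear)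
      have "(1/h) *\<^sub>R J h b = J h ((1/h) *\<^sub>R b)" by (simp add: linear_scale[OF l])
      then show ?case using J_dom[of h] elim closure_subset by auto
    qed
  qed simp
  then show ?thesis by auto
qed

lemma gen_closed:
  fixes x :: "nat \<Rightarrow> 'a"
  assumes xd: "\<And>n. x n \<in> gen_dom U" and xa: "x \<longlonglongrightarrow> a" and gy: "(\<lambda>n. gen U (x n)) \<longlonglongrightarrow> y"
  shows "a \<in> gen_dom U \<and> gen U a = y"
proof -
  have eq: "U h a - a = J h y" if h: "h \<ge> 0" for h
  proof -
    have "(\<lambda>n. J h (gen U (x n))) \<longlonglongrightarrow> J h y"
      using bounded_linear.tendsto[OF J_lin[OF h] gy] .
    moreover have "(\<lambda>n. U h (x n) - x n) \<longlonglongrightarrow> U h a - a"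
      by (intro tendsto_diff U_cont_x[OF h] xa)
    moreover have "J h (gen U (x n)) = U h (x n) - x n" for n by (rule J_gen[OF h xd])
    ultimately show ?thesis using LIMSEQ_unique by auto
  qed
  have "eventually (\<lambda>h. (1/h) *\<^sub>R J h y = (1/h) *\<^sub>R (U h a - a)) (at_right 0)"
    using eventually_at_right_less[of 0] by eventually_elim (simp add: eq)
  from Lim_transform_eventually[OF avg_lim this] show ?thesis by (rule gen_eqI)
qed

lemma adj_char:
  assumes "z \<in> adj_dom (gen_dom U) (gen U)"
  shows "\<And>x. x \<in> gen_dom U \<Longrightarrow> cinner (gen U x) z = cinner x (adj (gen_dom U) (gen U) z)"
proof -
  obtain w0 where w0: "\<forall>x\<in>gen_dom U. cinner (gen U x) z = cinner x w0"
    using assms unfolding adj_dom_def by blast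
  have uniq: "w = w0" if w: "\<forall>x\<in>gen_dom U. cinner (gen U x) z = cinner x w" for w
  proof -
    have "gen_dom U \<subseteq> {x. cinner x (w - w0) = 0}"
    proof
      fix x assume "x \<in> gen_dom U"
      then have "cinner x w = cinner x w0" using w w0 by metis
      then show "x \<in> {x. cinner x (w - w0) = 0}" by (simp add: cinner_diff_right)
    qed
    moreover have "closed {x. cinner x (w - w0) = 0}"
      using continuous_closed_preimage_constant[of UNIV "\<lambda>x. cinner x (w - w0)" 0]
      by (simp add: linear_continuous_on bounded_linear_cinner_left)
    ultimately have "closure (gen_dom U) \<subseteq> {x. cinner x (w - w0) = 0}"
      by (rule closure_minimal)
    then have "cinner (w - w0) (w - w0) = 0" using dom_dense by auto
    then show ?thesis by (simp add: cinner_self_eq_zero)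
  qed
  have "adj (gen_dom U) (gen U) z = w0"
    unfolding adj_def by (rule the_equality) (rule w0, erule uniq)
  then show "\<And>x. x \<in> gen_dom U \<Longrightarrow> cinner (gen U x) z = cinner x (adj (gen_dom U) (gen U) z)"
    using w0 by simp
qed

end

lemma integral_affine01:
  fixes q :: "real \<Rightarrow> 'b::banach"
  assumes ab: "a \<le> b" and q: "continuous_on {a..b} q"
  shows "integral {a..b} q = (b - a) *\<^sub>R integral {0..1} (\<lambda>\<beta>. q (a + (b - a) * \<beta>))"
proof (cases "a = b")
  case True then show ?thesis by simp
next
  case False
  then have m: "b - a > 0" using ab by simp
  have "(q has_integral integral {a..b} q) (cbox a b)"
    using integrable_continuous_real[OF q] by (simp add: integrable_integral)
  from has_integral_affinity'[OF this m, of a]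
  have "((\<lambda>x. q ((b - a) * x + a)) has_integral (integral {a..b} q /\<^sub>R (b - a))) {0..1}"
    using m by simp
  then have "integral {0..1} (\<lambda>\<beta>. q (a + (b - a) * \<beta>)) = integral {a..b} q /\<^sub>R (b - a)"
    by (simp add: add.commute integral_unique)
  then show ?thesis using m by simp
qed

lemma ext_cont:
  fixes q :: "real \<Rightarrow> 'b::topological_space"
  assumes "continuous_on {0..} q"
  shows "continuous_on UNIV (\<lambda>x. q (max 0 x))"
  by (rule continuous_on_compose2[OF assms]) (auto intro!: continuous_intros)

lemma param_cont1:
  fixes G :: "real \<Rightarrow> real \<Rightarrow> 'b::banach"
  assumes G: "continuous_on UNIV (\<lambda>(s, r). G s r)"
  shows "continuous_on {0..} (\<lambda>s. integral {0..s} (G s))"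
proof -
  have G2: "continuous_on UNIV (\<lambda>p. G (fst p) (snd p))"
    using G by (simp add: case_prod_beta')
  have eq: "integral {0..s} (G s) = s *\<^sub>R integral {0..1} (\<lambda>\<beta>. G s (s * \<beta>))" if "s \<in> {0..}" for s
  proof -
    have "continuous_on {0..s} (G s)"
      by (rule continuous_on_compose2[OF G2, of _ "\<lambda>r. (s, r)", simplified]) (auto intro!: continuous_intros)
    then show ?thesis using that integral_affine01[of 0 s "G s"] by simp
  qed
  have c0: "continuous_on UNIV ((\<lambda>p. G (fst p) (snd p)) \<circ> (\<lambda>p. (fst p, fst p * snd p)))"
    by (intro continuous_on_compose continuous_intros) (rule continuous_on_subset[OF G2], simp)
  have eqf: "(\<lambda>(s, \<beta>). G s (s * \<beta>)) = ((\<lambda>p. G (fst p) (snd p)) \<circ> (\<lambda>p. (fst p, fst p * snd p)))"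
    by (auto simp: fun_eq_iff)
  have "continuous_on ({0..} \<times> cbox 0 1) (\<lambda>(s, \<beta>). G s (s * \<beta>))"
    unfolding eqf by (rule continuous_on_subset[OF c0]) simp
  then have "continuous_on {0..} (\<lambda>s. integral (cbox 0 1) (\<lambda>\<beta>. G s (s * \<beta>)))"
    by (rule integral_continuous_on_param)
  then have "continuous_on {0..} (\<lambda>s. s *\<^sub>R integral {0..1} (\<lambda>\<beta>. G s (s * \<beta>)))"
    by (auto intro!: continuous_intros)
  then show ?thesis using eq continuous_on_cong by (metis (no_types, lifting))
qed

lemma param_cont2:
  fixes G :: "real \<Rightarrow> real \<Rightarrow> 'b::banach"
  assumes G: "continuous_on UNIV (\<lambda>(s, r). G s r)"
  shows "continuous_on {..t} (\<lambda>r. integral {r..t} (\<lambda>s. G s r))"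
proof -
  have G2: "continuous_on UNIV (\<lambda>p. G (fst p) (snd p))"
    using G by (simp add: case_prod_beta')
  have eq: "integral {r..t} (\<lambda>s. G s r) = (t - r) *\<^sub>R integral {0..1} (\<lambda>\<beta>. G (r + (t - r) * \<beta>) r)"
    if "r \<in> {..t}" for r
  proof -
    have "continuous_on {r..t} (\<lambda>s. G s r)"
      by (rule continuous_on_compose2[OF G2, of _ "\<lambda>s. (s, r)", simplified]) (auto intro!: continuous_intros)
    then show ?thesis using that integral_affine01[of r t "\<lambda>s. G s r"] by simp
  qed
  have c0: "continuous_on UNIV ((\<lambda>p. G (fst p) (snd p)) \<circ> (\<lambda>p. (fst p + (t - fst p) * snd p, fst p)))"
    by (intro continuous_on_compose continuous_intros) (rule continuous_on_subset[OF G2], simp)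
  have eqf: "(\<lambda>(r, \<beta>). G (r + (t - r) * \<beta>) r) = ((\<lambda>p. G (fst p) (snd p)) \<circ> (\<lambda>p. (fst p + (t - fst p) * snd p, fst p)))"
    by (auto simp: fun_eq_iff)
  have "continuous_on ({..t} \<times> cbox 0 1) (\<lambda>(r, \<beta>). G (r + (t - r) * \<beta>) r)"
    unfolding eqf by (rule continuous_on_subset[OF c0]) simp
  then have "continuous_on {..t} (\<lambda>r. integral (cbox 0 1) (\<lambda>\<beta>. G (r + (t - r) * \<beta>) r))"
    by (rule integral_continuous_on_param)
  then have "continuous_on {..t} (\<lambda>r. (t - r) *\<^sub>R integral {0..1} (\<lambda>\<beta>. G (r + (t - r) * \<beta>) r))"
    by (auto intro!: continuous_intros)
  then show ?thesis using eq continuous_on_cong by (metis (no_types, lifting))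
qed

lemma lint_eq_integral:
  fixes q :: "real \<Rightarrow> complex"
  assumes "continuous_on {a..b} q"
  shows "(\<integral>x. indicator {a..b} x *\<^sub>R q x \<partial>lborel) = integral {a..b} q"
proof -
  have "set_integrable lborel {a..b} q"
    unfolding set_integrable_def using borel_integrable_compact[OF compact_Icc assms] .
  from set_borel_integral_eq_integral(2)[OF this] show ?thesis
    unfolding set_lebesgue_integral_def .
qed

lemma fubini_tri:
  fixes F :: "real \<Rightarrow> real \<Rightarrow> complex"
  assumes F: "continuous_on UNIV (\<lambda>(s, r). F s r)" and t: "0 \<le> t"
  shows "integral {0..t} (\<lambda>s. integral {0..s} (\<lambda>r. F s r)) = integral {0..t} (\<lambda>r. integral {r..t} (\<lambda>s. F s r))"
proof -
  define T where "T = {p :: real \<times> real. 0 \<le> snd p \<and> snd p \<le> fst p \<and> fst p \<le> t}"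
  have F2: "continuous_on UNIV (\<lambda>p. F (fst p) (snd p))"
    using F by (simp add: case_prod_beta')
  have "closed T"
    unfolding T_def by (intro closed_Collect_conj closed_Collect_le) (auto intro!: continuous_intros)
  moreover have "bounded T"
  proof -
    have "T \<subseteq> cbox (0, 0) (t, t)" unfolding T_def by (auto simp: cbox_Pair_eq)
    then show ?thesis using bounded_cbox bounded_subset by blast
  qed
  ultimately have cT: "compact T" using compact_eq_bounded_closed by blast
  define g where "g p = indicator T p *\<^sub>R F (fst p) (snd p)" for p
  have "integrable lborel g"
    unfolding g_def by (rule borel_integrable_compact[OF cT]) (rule continuous_on_subset[OF F2], simp)
  then have int: "integrable (lborel \<Otimes>\<^sub>M lborel) g" by (simp add: lborel_prod)
  have inner1: "(\<integral>r. g (s, r) \<partial>lborel) = indicator {0..t} s *\<^sub>R integral {0..s} (\<lambda>r. F s r)" for s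
  proof -
    have "(\<integral>r. g (s, r) \<partial>lborel) = (\<integral>r. indicator {0..t} s *\<^sub>R (indicator {0..s} r *\<^sub>R F s r) \<partial>lborel)"
      by (rule Bochner_Integration.integral_cong) (auto simp: g_def T_def split: split_indicator)
    also have "\<dots> = indicator {0..t} s *\<^sub>R (\<integral>r. indicator {0..s} r *\<^sub>R F s r \<partial>lborel)"
      by (simp only: Bochner_Integration.integral_scaleR_right)
    also have "(\<integral>r. indicator {0..s} r *\<^sub>R F s r \<partial>lborel) = integral {0..s} (\<lambda>r. F s r)"
      by (rule lint_eq_integral)
        (rule continuous_on_compose2[OF F2, of _ "\<lambda>r. (s, r)", simplified], auto intro!: continuous_intros)
    finally show ?thesis .
  qed
  have inner2: "(\<integral>s. g (s, r) \<partial>lborel) = indicator {0..t} r *\<^sub>R integral {r..t} (\<lambda>s. F s r)" for r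
  proof -
    have "(\<integral>s. g (s, r) \<partial>lborel) = (\<integral>s. indicator {0..t} r *\<^sub>R (indicator {r..t} s *\<^sub>R F s r) \<partial>lborel)"
      by (rule Bochner_Integration.integral_cong) (auto simp: g_def T_def split: split_indicator)
    also have "\<dots> = indicator {0..t} r *\<^sub>R (\<integral>s. indicator {r..t} s *\<^sub>R F s r \<partial>lborel)"
      by (simp only: Bochner_Integration.integral_scaleR_right)
    also have "(\<integral>s. indicator {r..t} s *\<^sub>R F s r \<partial>lborel) = integral {r..t} (\<lambda>s. F s r)"
      by (rule lint_eq_integral)
        (rule continuous_on_compose2[OF F2, of _ "\<lambda>s. (s, r)", simplified], auto intro!: continuous_intros)
    finally show ?thesis .
  qed
  have "(\<integral>r. \<integral>s. g (s, r) \<partial>lborel \<partial>lborel) = (\<integral>s. \<integral>r. g (s, r) \<partial>lborel \<partial>lborel)"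
  proof -
    have i2: "integrable (lborel \<Otimes>\<^sub>M lborel) (\<lambda>(x, y). g (x, y))" using int by (simp only: case_prod_eta)
    show ?thesis by (rule lborel_pair.Fubini_integral[OF i2])
  qed
  also have "(\<integral>s. \<integral>r. g (s, r) \<partial>lborel \<partial>lborel) = (\<integral>s. indicator {0..t} s *\<^sub>R integral {0..s} (\<lambda>r. F s r) \<partial>lborel)"
    by (simp add: inner1)
  also have "\<dots> = integral {0..t} (\<lambda>s. integral {0..s} (\<lambda>r. F s r))"
  proof (rule lint_eq_integral)
    have "continuous_on {0..} (\<lambda>s. integral {0..s} (\<lambda>r. F s r))"
      using param_cont1[OF F] by simp
    then show "continuous_on {0..t} (\<lambda>s. integral {0..s} (\<lambda>r. F s r))"
      by (rule continuous_on_subset) auto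
  qed
  also have "(\<integral>r. \<integral>s. g (s, r) \<partial>lborel \<partial>lborel) = (\<integral>r. indicator {0..t} r *\<^sub>R integral {r..t} (\<lambda>s. F s r) \<partial>lborel)"
    by (simp add: inner2)
  also have "\<dots> = integral {0..t} (\<lambda>r. integral {r..t} (\<lambda>s. F s r))"
  proof (rule lint_eq_integral)
    show "continuous_on {0..t} (\<lambda>r. integral {r..t} (\<lambda>s. F s r))"
      by (rule continuous_on_subset[OF param_cont2[OF F]]) auto
  qed
  finally show ?thesis by simp
qed

locale pert = c0sg U for U :: "real \<Rightarrow> 'a::complex_hilbert \<Rightarrow> 'a" +
  fixes z w :: 'a and P Q :: "'a \<Rightarrow> 'a" and f :: "'a \<Rightarrow> real \<Rightarrow> complex" and u :: "'a \<Rightarrow> real \<Rightarrow> 'a"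
  assumes zdom: "z \<in> adj_dom (gen_dom U) (gen U)" and znz: "z \<noteq> 0"
    and w_def: "w = adj (gen_dom U) (gen U) z"
    and P_def: "P = (\<lambda>x. (cinner x z / cinner z z) *\<^sub>C z)"
    and Q_def: "Q = (\<lambda>x. x - P x)"
    and f_cont: "\<And>x. continuous_on {0..} (f x)"
    and f_eq0: "\<And>x t. t \<ge> 0 \<Longrightarrow>
        f x t = cinner (U t (Q x)) (Q w) / cinner z z
              - integral {0..t} (\<lambda>s. f x (t - s) * (cinner (U s z) (Q w) / cinner z z))"
    and u_def: "u = (\<lambda>x t. P x + U t (Q x) - integral {0..t} (\<lambda>s. f x (t - s) *\<^sub>C U s z))"
begin

definition "cc = cinner z z"
definition "phi b = cinner b (Q w) / cc"
definition "kk s = phi (U s z)"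
definition "yy x t = U t (Q x) - integral {0..t} (\<lambda>s. f x (t - s) *\<^sub>C U s z)"
definition "conv g t = integral {0..t} (\<lambda>s. g (t - s) * kk s)"

lemma cc_nz: "cc \<noteq> 0"
  using znz by (simp add: cc_def cinner_self_eq_zero)

lemma adjw: "x \<in> gen_dom U \<Longrightarrow> cinner (gen U x) z = cinner x w"
  using adj_char[OF zdom] w_def by simp

lemma P_eq: "P x = (cinner x z / cc) *\<^sub>C z"
  by (simp add: P_def cc_def)

lemma P_lin: "bounded_linear P"
proof -
  have "bounded_linear (\<lambda>x. (cinner x z / cc) *\<^sub>C z)"
    using bounded_linear_compose[OF bounded_linear_compose[OF bounded_linear_scaleC_left[of z] bounded_linear_divide[of cc]] bounded_linear_cinner_left[of z]]
    by simp
  then show ?thesis by (simp add: P_eq[abs_def])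
qed

lemma Q_eq: "Q x = x - P x"
  by (simp add: Q_def)

lemma Q_lin: "bounded_linear Q"
  unfolding Q_def using bounded_linear_sub[OF bounded_linear_ident P_lin] by simp

lemma P_add: "P (x + y) = P x + P y"
  using P_lin bounded_linear.linear linear_add by blast

lemma P_scaleC: "P (a *\<^sub>C x) = a *\<^sub>C P x"
  by (simp add: P_eq cinner_scaleC_left scaleC_scaleC)

lemma Q_add: "Q (x + y) = Q x + Q y"
  using Q_lin bounded_linear.linear linear_add by blast

lemma Q_diff: "Q (x - y) = Q x - Q y"
  using Q_lin bounded_linear.linear linear_diff by blast

lemma Q_scaleC: "Q (a *\<^sub>C x) = a *\<^sub>C Q x"
  by (simp add: Q_eq P_scaleC scaleC_diff_right)

lemma cinner_P_z: "cinner (P x) z = cinner x z"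
  using cc_nz by (simp add: P_eq cinner_scaleC_left cc_def)

lemma PP: "P (P x) = P x"
proof -
  have "P (P x) = (cinner (P x) z / cc) *\<^sub>C z" by (rule P_eq)
  also have "\<dots> = P x" by (rule cinner_P_z[of x, THEN arg_cong[where f="\<lambda>a. (a / cc) *\<^sub>C z"], THEN trans], rule P_eq[symmetric])
  finally show ?thesis .
qed

lemma PQ: "P (Q x) = 0"
  using P_lin bounded_linear.linear linear_diff PP by (metis Q_eq diff_self)

lemma QQ: "Q (Q x) = Q x"
  by (simp add: Q_eq[of "Q x"] PQ)

lemma Qz: "cinner (Q x) z = 0"
  using cinner_P_z[of x] by (simp add: Q_eq cinner_diff_left)

lemma PQ_sum: "P x + Q x = x"
  by (simp add: Q_eq)

lemma P_mult_z: "P (a *\<^sub>C z) = a *\<^sub>C z"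
  using cc_nz by (simp add: P_eq cinner_scaleC_left cc_def)

lemma Q_mult_z: "Q (a *\<^sub>C z) = 0"
  by (simp add: Q_eq P_mult_z)

lemma phi_lin: "bounded_linear phi"
proof -
  have "bounded_linear (\<lambda>x. cinner x (Q w) / cc)"
    using bounded_linear_compose[OF bounded_linear_divide[of cc] bounded_linear_cinner_left[of "Q w"]] by simp
  then show ?thesis by (simp add: phi_def[abs_def])
qed

lemma phi_scaleC: "phi (a *\<^sub>C b) = a * phi b"
  by (simp add: phi_def cinner_scaleC_left)

lemma phi_add: "phi (x + y) = phi x + phi y"
  by (simp add: phi_def cinner_add_left add_divide_distrib)

lemma phi_diff: "phi (x - y) = phi x - phi y"
  by (simp add: phi_def cinner_diff_left diff_divide_distrib)

lemma kk_cont: "continuous_on {0..} kk"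
  unfolding kk_def[abs_def] phi_def
  using cc_nz by (intro continuous_intros U_cont) auto

lemma f_eq: "t \<ge> 0 \<Longrightarrow> f x t = phi (U t (Q x)) - conv (f x) t"
  using f_eq0[of t x] by (simp add: phi_def kk_def conv_def cc_def)

lemma u_eq: "u x t = P x + yy x t"
  by (simp add: u_def yy_def)

lemma cont_flip:
  fixes g :: "real \<Rightarrow> 'b::topological_space"
  assumes "continuous_on {0..} g" "t \<ge> 0"
  shows "continuous_on {0..t} (\<lambda>s. g (t - s))"
  by (rule continuous_on_compose2[OF assms(1)]) (auto intro!: continuous_intros)

lemma conv_integrable:
  assumes "continuous_on {0..} g" "t \<ge> 0"
  shows "(\<lambda>s. g (t - s) * kk s) integrable_on {0..t}"
  by (intro integrable_continuous_real continuous_intros cont_flip[OF assms] continuous_on_subset[OF kk_cont]) auto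

lemma conv_diff:
  assumes "continuous_on {0..} g1" "continuous_on {0..} g2" "t \<ge> 0"
  shows "conv (\<lambda>\<tau>. g1 \<tau> - g2 \<tau>) t = conv g1 t - conv g2 t"
  unfolding conv_def
  using integral_diff[OF conv_integrable[OF assms(1,3)] conv_integrable[OF assms(2,3)]]
  by (simp add: algebra_simps)

lemma conv_add:
  assumes "continuous_on {0..} g1" "continuous_on {0..} g2" "t \<ge> 0"
  shows "conv (\<lambda>\<tau>. g1 \<tau> + g2 \<tau>) t = conv g1 t + conv g2 t"
  unfolding conv_def
  using integral_add[OF conv_integrable[OF assms(1,3)] conv_integrable[OF assms(2,3)]]
  by (simp add: algebra_simps)

lemma conv_scale:
  shows "conv (\<lambda>\<tau>. a * g \<tau>) t = a * conv g t"
  unfolding conv_def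
  by (simp add: mult.assoc)

lemma kk_bound: "\<exists>K\<ge>0. \<forall>s\<in>{0..T}. cmod (kk s) \<le> K"
proof -
  have "compact (kk ` {0..T})"
    by (rule compact_continuous_image) (auto intro: continuous_on_subset[OF kk_cont])
  then obtain K where "K > 0" "\<forall>v\<in>kk ` {0..T}. norm v \<le> K"
    using compact_imp_bounded bounded_pos by blast
  then show ?thesis by (auto intro!: exI[of _ K])
qed

lemma conv_norm_le:
  assumes g: "continuous_on {0..} g" and t: "0 \<le> t" "t \<le> T" and K: "\<forall>s\<in>{0..T}. cmod (kk s) \<le> K"
  shows "cmod (conv g t) \<le> K * integral {0..t} (\<lambda>r. cmod (g r))"
proof -
  have ci: "continuous_on {0..t} (\<lambda>s. cmod (g (t - s)) * K)"
    by (intro continuous_intros cont_flip[OF g t(1)])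
  have "cmod (conv g t) \<le> integral {0..t} (\<lambda>s. cmod (g (t - s)) * K)"
    unfolding conv_def
  proof (rule integral_norm_bound_integral)
    show "(\<lambda>s. g (t - s) * kk s) integrable_on {0..t}" by (rule conv_integrable[OF g t(1)])
    show "(\<lambda>s. cmod (g (t - s)) * K) integrable_on {0..t}" by (rule integrable_continuous_real[OF ci])
    fix s assume "s \<in> {0..t}"
    then have "cmod (kk s) \<le> K" using K t by auto
    then show "norm (g (t - s) * kk s) \<le> cmod (g (t - s)) * K"
      by (simp add: norm_mult mult_left_mono)
  qed
  also have "\<dots> = integral {0..t} (\<lambda>s. cmod (g (t - s))) * K"
    by simp
  also have "integral {0..t} (\<lambda>s. cmod (g (t - s))) = integral {0..t} (\<lambda>r. cmod (g r))"
    using integral_flip[where h="\<lambda>r. cmod (g r)" and t=t] by simp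
  finally show ?thesis by (simp add: mult.commute)
qed

lemma volterra_zero:
  assumes g: "continuous_on {0..} g" and eq: "\<And>t. t \<ge> 0 \<Longrightarrow> g t = - conv g t" and t: "t \<ge> 0"
  shows "g t = 0"
proof -
  obtain K where K: "K \<ge> 0" "\<forall>s\<in>{0..t}. cmod (kk s) \<le> K" using kk_bound by blast
  have "cmod (g t) \<le> 0 * exp (K * t)"
  proof (rule gronwall[where T=t])
    show "continuous_on {0..t} (\<lambda>r. cmod (g r))"
      by (intro continuous_intros continuous_on_subset[OF g]) auto
    fix s assume s: "s \<in> {0..t}"
    have "cmod (g s) = cmod (conv g s)" using eq[of s] s by simp
    also have "\<dots> \<le> K * integral {0..s} (\<lambda>r. cmod (g r))"
      using conv_norm_le[OF g _ _ K(2), of s] s by auto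
    finally show "cmod (g s) \<le> 0 + K * integral {0..s} (\<lambda>r. cmod (g r))" by simp
  qed (use K t in auto)
  then show ?thesis by simp
qed

lemma f_add: "t \<ge> 0 \<Longrightarrow> f (x + y) t = f x t + f y t"
proof -
  define g where "g \<tau> = f (x + y) \<tau> - (f x \<tau> + f y \<tau>)" for \<tau>
  have gc: "continuous_on {0..} g" unfolding g_def by (intro continuous_intros f_cont)
  have "g t = - conv g t" if t: "t \<ge> 0" for t
  proof -
    have "conv g t = conv (f (x + y)) t - conv (\<lambda>\<tau>. f x \<tau> + f y \<tau>) t"
      unfolding g_def by (rule conv_diff) (intro continuous_intros f_cont t)+
    moreover have "conv (\<lambda>\<tau>. f x \<tau> + f y \<tau>) t = conv (f x) t + conv (f y) t"
      by (rule conv_add[OF f_cont f_cont t])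
    moreover have "phi (U t (Q (x + y))) = phi (U t (Q x)) + phi (U t (Q y))"
      using t by (simp add: Q_add U_add phi_add)
    ultimately show ?thesis
      unfolding g_def using f_eq[OF t, of "x + y"] f_eq[OF t, of x] f_eq[OF t, of y]
      by (simp only:) (simp add: algebra_simps)
  qed
  then show "t \<ge> 0 \<Longrightarrow> f (x + y) t = f x t + f y t"
    using volterra_zero[OF gc] by (simp add: g_def)
qed

lemma f_scale: "t \<ge> 0 \<Longrightarrow> f (a *\<^sub>C x) t = a * f x t"
proof -
  define g where "g \<tau> = f (a *\<^sub>C x) \<tau> - a * f x \<tau>" for \<tau>
  have gc: "continuous_on {0..} g" unfolding g_def by (intro continuous_intros f_cont)
  have "g t = - conv g t" if t: "t \<ge> 0" for t
  proof -
    have "conv g t = conv (f (a *\<^sub>C x)) t - conv (\<lambda>\<tau>. a * f x \<tau>) t"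
      unfolding g_def by (rule conv_diff) (intro continuous_intros f_cont t)+
    moreover have "conv (\<lambda>\<tau>. a * f x \<tau>) t = a * conv (f x) t"
      by (rule conv_scale)
    moreover have "phi (U t (Q (a *\<^sub>C x))) = a * phi (U t (Q x))"
      using t by (simp add: Q_scaleC U_scaleC phi_scaleC)
    ultimately show ?thesis
      unfolding g_def using f_eq[OF t, of "a *\<^sub>C x"] f_eq[OF t, of x]
      by (simp only:) (simp add: algebra_simps)
  qed
  then show "t \<ge> 0 \<Longrightarrow> f (a *\<^sub>C x) t = a * f x t"
    using volterra_zero[OF gc] by (simp add: g_def)
qed

end

context pert
begin

lemma lin_bound: "bounded_linear T \<Longrightarrow> \<exists>K>0. \<forall>x. norm (T x) \<le> K * norm x"
  using bounded_linear.pos_bounded by (metis mult.commute)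

lemma f_bound: "\<exists>C\<ge>0. \<forall>x. \<forall>t\<in>{0..T}. cmod (f x t) \<le> C * norm x"
proof -
  obtain M where M: "M \<ge> 1" "\<And>t x. t \<in> {0..T} \<Longrightarrow> norm (U t x) \<le> M * norm x"
    using bound[of T] by blast
  obtain nQ where nQ: "nQ > 0" "\<And>x. norm (Q x) \<le> nQ * norm x" using lin_bound[OF Q_lin] by blast
  obtain np where np: "np > 0" "\<And>x. norm (phi x) \<le> np * norm x" using lin_bound[OF phi_lin] by blast
  obtain K where K: "K \<ge> 0" "\<forall>s\<in>{0..T}. cmod (kk s) \<le> K" using kk_bound by blast
  define A where "A = np * M * nQ"
  have A: "A \<ge> 0" using M nQ np by (simp add: A_def)
  have "cmod (f x t) \<le> (A * exp (K * T)) * norm x" if t: "t \<in> {0..T}" for x t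
  proof -
    have "cmod (f x t) \<le> (A * norm x) * exp (K * t)"
    proof (rule gronwall[where T=T])
      show "continuous_on {0..T} (\<lambda>r. cmod (f x r))"
        by (intro continuous_intros continuous_on_subset[OF f_cont]) auto
      fix s assume s: "s \<in> {0..T}"
      have "cmod (phi (U s (Q x))) \<le> np * (M * (nQ * norm x))"
      proof -
        have "cmod (phi (U s (Q x))) \<le> np * norm (U s (Q x))" using np by simp
        also have "\<dots> \<le> np * (M * norm (Q x))" using M(2)[OF s] np by (simp add: mult_left_mono)
        also have "\<dots> \<le> np * (M * (nQ * norm x))"
          using nQ(2)[of x] M np by (intro mult_left_mono) auto
        finally show ?thesis .
      qed
      moreover have "cmod (conv (f x) s) \<le> K * integral {0..s} (\<lambda>r. cmod (f x r))"
        using conv_norm_le[OF f_cont _ _ K(2), of s] s by auto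
      moreover have "cmod (f x s) \<le> cmod (phi (U s (Q x))) + cmod (conv (f x) s)"
      proof -
        have "f x s = phi (U s (Q x)) - conv (f x) s" using f_eq[of s x] s by simp
        then show ?thesis by (simp add: norm_triangle_ineq4)
      qed
      ultimately show "cmod (f x s) \<le> A * norm x + K * integral {0..s} (\<lambda>r. cmod (f x r))"
        by (simp add: A_def mult.assoc)
    qed (use K t in auto)
    also have "\<dots> \<le> (A * norm x) * exp (K * T)"
      using t K A by (intro mult_left_mono) (auto intro: mult_left_mono)
    finally show ?thesis by (simp add: algebra_simps)
  qed
  moreover have "A * exp (K * T) \<ge> 0" using A by simp
  ultimately show ?thesis by blast
qed

lemma I_cont: "t \<ge> 0 \<Longrightarrow> continuous_on {0..t} (\<lambda>s. f x (t - s) *\<^sub>C U s z)"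
  by (intro continuous_intros cont_flip[OF f_cont] U_cont_on) auto

lemma I_int: "t \<ge> 0 \<Longrightarrow> (\<lambda>s. f x (t - s) *\<^sub>C U s z) integrable_on {0..t}"
  by (rule integrable_continuous_real[OF I_cont])

lemma yy_add: assumes t: "t \<ge> 0" shows "yy (x + y) t = yy x t + yy y t"
proof -
  have "integral {0..t} (\<lambda>s. f (x + y) (t - s) *\<^sub>C U s z)
      = integral {0..t} (\<lambda>s. f x (t - s) *\<^sub>C U s z + f y (t - s) *\<^sub>C U s z)"
    by (rule integral_cong) (simp add: f_add scaleC_add_left)
  also have "\<dots> = integral {0..t} (\<lambda>s. f x (t - s) *\<^sub>C U s z) + integral {0..t} (\<lambda>s. f y (t - s) *\<^sub>C U s z)"
    by (rule integral_add[OF I_int[OF t] I_int[OF t]])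
  finally show ?thesis using t by (simp add: yy_def Q_add U_add algebra_simps)
qed

lemma yy_scale: assumes t: "t \<ge> 0" shows "yy (a *\<^sub>C x) t = a *\<^sub>C yy x t"
proof -
  have "integral {0..t} (\<lambda>s. f (a *\<^sub>C x) (t - s) *\<^sub>C U s z)
      = integral {0..t} ((\<lambda>v. a *\<^sub>C v) \<circ> (\<lambda>s. f x (t - s) *\<^sub>C U s z))"
    by (rule integral_cong) (simp add: f_scale scaleC_scaleC)
  also have "\<dots> = a *\<^sub>C integral {0..t} (\<lambda>s. f x (t - s) *\<^sub>C U s z)"
    by (rule integral_linear[OF I_int[OF t] bounded_linear_scaleC_right])
  finally show ?thesis using t by (simp add: yy_def Q_scaleC U_scaleC scaleC_diff_right)
qed

lemma I_bound: "\<exists>B\<ge>0. \<forall>x. \<forall>t\<in>{0..T}. norm (integral {0..t} (\<lambda>s. f x (t - s) *\<^sub>C U s z)) \<le> B * norm x * t"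
proof -
  obtain M where M: "M \<ge> 1" "\<And>t x. t \<in> {0..T} \<Longrightarrow> norm (U t x) \<le> M * norm x"
    using bound[of T] by blast
  obtain C where C: "C \<ge> 0" "\<And>x t. t \<in> {0..T} \<Longrightarrow> cmod (f x t) \<le> C * norm x"
    using f_bound[of T] by blast
  have "norm (integral {0..t} (\<lambda>s. f x (t - s) *\<^sub>C U s z)) \<le> (C * M * norm z) * norm x * t"
    if t: "t \<in> {0..T}" for x t
  proof -
    have "norm (integral {0..t} (\<lambda>s. f x (t - s) *\<^sub>C U s z)) \<le> ((C * norm x) * (M * norm z)) * (t - 0)"
    proof (rule integral_bound)
      show "continuous_on {0..t} (\<lambda>s. f x (t - s) *\<^sub>C U s z)" using t by (intro I_cont) auto
      fix s assume s: "s \<in> {0..t}"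
      then have "t - s \<in> {0..T}" "s \<in> {0..T}" using t by auto
      then show "norm (f x (t - s) *\<^sub>C U s z) \<le> (C * norm x) * (M * norm z)"
        using C(2) M(2) by (simp add: norm_scaleC mult_mono' C(1))
    qed (use t in auto)
    then show ?thesis by (simp add: algebra_simps)
  qed
  moreover have "C * M * norm z \<ge> 0" using C M by simp
  ultimately show ?thesis by blast
qed

lemma u_clin: assumes t: "t \<ge> 0" shows "bounded_clin (\<lambda>x. u x t)"
proof -
  obtain nP where nP: "nP > 0" "\<And>x. norm (P x) \<le> nP * norm x" using lin_bound[OF P_lin] by blast
  obtain nQ where nQ: "nQ > 0" "\<And>x. norm (Q x) \<le> nQ * norm x" using lin_bound[OF Q_lin] by blast
  obtain M where M: "M \<ge> 1" "\<And>s x. s \<in> {0..t} \<Longrightarrow> norm (U s x) \<le> M * norm x"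
    using bound[of t] by blast
  obtain B where B: "B \<ge> 0" "\<And>x s. s \<in> {0..t} \<Longrightarrow> norm (integral {0..s} (\<lambda>r. f x (s - r) *\<^sub>C U r z)) \<le> B * norm x * s"
    using I_bound[of t] by blast
  have "norm (u x t) \<le> (nP + M * nQ + B * t) * norm x" for x
  proof -
    have "norm (u x t) \<le> norm (P x) + norm (U t (Q x)) + norm (integral {0..t} (\<lambda>r. f x (t - r) *\<^sub>C U r z))"
    proof -
      have "norm (u x t) \<le> norm (P x + U t (Q x)) + norm (integral {0..t} (\<lambda>r. f x (t - r) *\<^sub>C U r z))"
        unfolding u_def by (rule norm_triangle_ineq4)
      also have "norm (P x + U t (Q x)) \<le> norm (P x) + norm (U t (Q x))" by (rule norm_triangle_ineq)
      finally show ?thesis by simp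
    qed
    also have "\<dots> \<le> nP * norm x + M * (nQ * norm x) + B * norm x * t"
    proof (intro add_mono)
      show "norm (P x) \<le> nP * norm x" by (rule nP(2))
      have "norm (U t (Q x)) \<le> M * norm (Q x)" using M(2)[of t] t by simp
      also have "\<dots> \<le> M * (nQ * norm x)" using M nQ by (intro mult_left_mono) auto
      finally show "norm (U t (Q x)) \<le> M * (nQ * norm x)" .
      show "norm (integral {0..t} (\<lambda>r. f x (t - r) *\<^sub>C U r z)) \<le> B * norm x * t"
        using B(2)[of t] t by simp
    qed
    finally show ?thesis by (simp add: algebra_simps)
  qed
  moreover have "u (x + y) t = u x t + u y t" for x y
    using t by (simp add: u_eq P_add yy_add algebra_simps)
  moreover have "u (a *\<^sub>C x) t = a *\<^sub>C u x t" for a x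
    using t by (simp add: u_eq P_scaleC yy_scale scaleC_add_right)
  ultimately show ?thesis unfolding bounded_clin_def by blast
qed

lemma u_0: "u x 0 = x"
  by (simp add: u_eq yy_def U_0 PQ_sum)

lemma I_lim0: "((\<lambda>t. integral {0..t} (\<lambda>s. f x (t - s) *\<^sub>C U s z)) \<longlongrightarrow> 0) (at_right 0)"
proof -
  obtain B where B: "B \<ge> 0" "\<And>x s. s \<in> {0..1} \<Longrightarrow> norm (integral {0..s} (\<lambda>r. f x (s - r) *\<^sub>C U r z)) \<le> B * norm x * s"
    using I_bound[of 1] by blast
  have "eventually (\<lambda>t. norm (integral {0..t} (\<lambda>s. f x (t - s) *\<^sub>C U s z)) \<le> (B * norm x) * t) (at_right 0)"
  proof -
    have "eventually (\<lambda>t. t \<in> {0<..<1::real}) (at_right 0)" by (rule eventually_at_right_real) simp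
    then show ?thesis by eventually_elim (use B in auto)
  qed
  moreover have "((\<lambda>t. (B * norm x) * t) \<longlongrightarrow> 0) (at_right 0)"
    by (intro tendsto_mult_right_zero tendsto_ident_at)
  ultimately show ?thesis by (rule Lim_null_comparison)
qed

lemma u_cont0: "((\<lambda>t. u x t) \<longlongrightarrow> x) (at_right 0)"
proof -
  have "((\<lambda>t. P x + U t (Q x) - integral {0..t} (\<lambda>s. f x (t - s) *\<^sub>C U s z)) \<longlongrightarrow> P x + Q x - 0) (at_right 0)"
    by (intro tendsto_intros U_right0 I_lim0)
  then show ?thesis by (simp add: u_def PQ_sum)
qed

end

context pert
begin

lemma conv_0: "conv g 0 = 0"
  by (simp add: conv_def)

lemma f_at0: "f x 0 = phi (Q x)"
  using f_eq[of 0 x] by (simp add: conv_0 U_0)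

lemma I_quot: "((\<lambda>h. (1/h) *\<^sub>R integral {0..h} (\<lambda>s. f x (h - s) *\<^sub>C U s z)) \<longlongrightarrow> f x 0 *\<^sub>C z) (at_right 0)"
proof (rule tendstoI)
  fix e :: real assume e: "e > 0"
  define c0 where "c0 = f x 0"
  obtain M where M: "M \<ge> 1" "\<And>s y. s \<in> {0..1} \<Longrightarrow> norm (U s y) \<le> M * norm y"
    using bound[of 1] by blast
  define Mz where "Mz = M * norm z + 1"
  have Mz: "Mz > 0" using M by (simp add: Mz_def add_nonneg_pos)
  define e1 where "e1 = e / 4 / Mz"
  define e2 where "e2 = e / 4 / (cmod c0 + 1)"
  have e1: "e1 > 0" using e Mz by (simp add: e1_def)
  have e2: "e2 > 0" using e by (simp add: e2_def add_nonneg_pos)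
  have z0: "(0::real) \<in> {0..}" by simp
  obtain d1 where d1: "d1 > 0" "\<And>a. a \<in> {0..} \<Longrightarrow> dist a 0 < d1 \<Longrightarrow> dist (f x a) (f x 0) < e1"
    using continuous_on_iff[THEN iffD1, OF f_cont[of x], rule_format, OF z0 e1] by blast
  have "eventually (\<lambda>s. dist (U s z) z < e2) (at_right 0)"
    using U_right0[of z] e2 tendstoD by blast
  then obtain d2 where d2: "d2 > 0" "\<And>s. 0 < s \<Longrightarrow> s < d2 \<Longrightarrow> dist (U s z) z < e2"
    unfolding eventually_at_right_field by auto
  define d where "d = min 1 (min d1 d2)"
  have d: "d > 0" using d1 d2 by (simp add: d_def)
  have pt: "norm (f x (h - s) *\<^sub>C U s z - c0 *\<^sub>C z) \<le> e / 2"
    if h: "0 < h" "h < d" and s: "s \<in> {0..h}" for h s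
  proof -
    have "dist (f x (h - s)) c0 < e1"
      unfolding c0_def using s h d_def by (intro d1(2)) (auto simp: dist_real_def)
    then have a: "cmod (f x (h - s) - c0) \<le> e1" by (simp add: dist_norm)
    have b: "norm (U s z - z) \<le> e2"
    proof (cases "s = 0")
      case True then show ?thesis using e2 by (simp add: U_0)
    next
      case False
      then have "dist (U s z) z < e2" using s h d_def by (intro d2(2)) auto
      then show ?thesis by (simp add: dist_norm)
    qed
    have nU: "norm (U s z) \<le> Mz" using M(2)[of s z] s h d_def by (auto simp: Mz_def)
    have eq: "f x (h - s) *\<^sub>C U s z - c0 *\<^sub>C z = (f x (h - s) - c0) *\<^sub>C U s z + c0 *\<^sub>C (U s z - z)"
      by (simp add: scaleC_diff_left scaleC_diff_right)
    have "norm (f x (h - s) *\<^sub>C U s z - c0 *\<^sub>C z) \<le> cmod (f x (h - s) - c0) * norm (U s z) + cmod c0 * norm (U s z - z)"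
      unfolding eq by (rule order_trans[OF norm_triangle_ineq]) (simp add: norm_scaleC)
    also have "\<dots> \<le> e1 * Mz + (cmod c0 + 1) * e2"
      by (intro add_mono mult_mono a nU b) (use e1 in auto)
    also have "\<dots> = e / 4 + e / 4"
    proof -
      have p: "cmod c0 + 1 > 0" by (simp add: add_nonneg_pos)
      have "e1 * Mz = e / 4" using Mz by (simp add: e1_def)
      moreover have "(cmod c0 + 1) * e2 = e / 4"
      proof -
        have p0: "cmod c0 + 1 \<noteq> 0" using p by simp
        have aux: "\<And>a b::real. a \<noteq> 0 \<Longrightarrow> a * (b / a) = b" by simp
        show ?thesis unfolding e2_def by (rule aux[OF p0])
      qed
      ultimately show ?thesis by simp
    qed
    finally show ?thesis by simp
  qed
  have "eventually (\<lambda>h. h \<in> {0<..<d}) (at_right 0)" by (rule eventually_at_right_real[OF d])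
  then show "eventually (\<lambda>h. dist ((1/h) *\<^sub>R integral {0..h} (\<lambda>s. f x (h - s) *\<^sub>C U s z)) (f x 0 *\<^sub>C z) < e) (at_right 0)"
  proof eventually_elim
    case (elim h)
    then have h: "0 < h" "h < d" by auto
    have int2: "integral {0..h} (\<lambda>s. f x (h - s) *\<^sub>C U s z - c0 *\<^sub>C z) = integral {0..h} (\<lambda>s. f x (h - s) *\<^sub>C U s z) - h *\<^sub>R (c0 *\<^sub>C z)"
      using integral_diff[OF I_int[of h x] integrable_const_ivl[of "c0 *\<^sub>C z" 0 h]] h by simp
    have "norm (integral {0..h} (\<lambda>s. f x (h - s) *\<^sub>C U s z - c0 *\<^sub>C z)) \<le> (e / 2) * (h - 0)"
      by (rule integral_bound) (use h pt in \<open>auto intro!: continuous_intros I_cont\<close>)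
    then have nb: "norm (integral {0..h} (\<lambda>s. f x (h - s) *\<^sub>C U s z) - h *\<^sub>R (c0 *\<^sub>C z)) \<le> (e / 2) * h"
      by (simp add: int2)
    have eqq: "(1/h) *\<^sub>R integral {0..h} (\<lambda>s. f x (h - s) *\<^sub>C U s z) - c0 *\<^sub>C z
        = (1/h) *\<^sub>R (integral {0..h} (\<lambda>s. f x (h - s) *\<^sub>C U s z) - h *\<^sub>R (c0 *\<^sub>C z))"
      using h by (simp add: scaleR_diff_right)
    have "norm ((1/h) *\<^sub>R integral {0..h} (\<lambda>s. f x (h - s) *\<^sub>C U s z) - c0 *\<^sub>C z)
        = (1/h) * norm (integral {0..h} (\<lambda>s. f x (h - s) *\<^sub>C U s z) - h *\<^sub>R (c0 *\<^sub>C z))"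
      unfolding eqq norm_scaleR using h by simp
    also have "\<dots> \<le> (1/h) * ((e / 2) * h)"
      using nb h by (intro mult_left_mono) auto
    also have "\<dots> = e / 2" using h by simp
    finally have "norm ((1/h) *\<^sub>R integral {0..h} (\<lambda>s. f x (h - s) *\<^sub>C U s z) - c0 *\<^sub>C z) \<le> e / 2" .
    then show ?case using e by (simp add: dist_norm c0_def)
  qed
qed

lemma u_minus_x: "u x h - x = (U h (Q x) - Q x) - integral {0..h} (\<lambda>s. f x (h - s) *\<^sub>C U s z)"
proof -
  have "u x h - x = P x + U h (Q x) - integral {0..h} (\<lambda>s. f x (h - s) *\<^sub>C U s z) - (P x + Q x)"
    by (simp add: u_def PQ_sum)
  then show ?thesis by (simp add: algebra_simps)
qed

lemma QgenQ: "Q x \<in> gen_dom U \<Longrightarrow> gen U (Q x) - f x 0 *\<^sub>C z = Q (gen U (Q x))"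
proof -
  assume d: "Q x \<in> gen_dom U"
  have "cinner (Q x) (P w) = 0"
    by (simp add: P_eq cinner_scaleC_right Qz)
  then have "cinner (Q x) (Q w) = cinner (Q x) w"
    by (simp add: Q_eq cinner_diff_right)
  then have "f x 0 = cinner (gen U (Q x)) z / cc"
    by (simp add: f_at0 phi_def adjw[OF d])
  then show ?thesis by (simp add: Q_eq P_eq)
qed

lemma gen_u_lim: assumes d: "Q x \<in> gen_dom U"
  shows "((\<lambda>h. (1/h) *\<^sub>R (u x h - x)) \<longlongrightarrow> Q (gen U (Q x))) (at_right 0)"
proof -
  have "((\<lambda>h. (1/h) *\<^sub>R (U h (Q x) - Q x) - (1/h) *\<^sub>R integral {0..h} (\<lambda>s. f x (h - s) *\<^sub>C U s z))
      \<longlongrightarrow> gen U (Q x) - f x 0 *\<^sub>C z) (at_right 0)"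
    by (intro tendsto_diff gen_tendsto[OF d] I_quot)
  then show ?thesis by (simp add: u_minus_x scaleR_diff_right QgenQ[OF d])
qed

lemma dom_u: assumes "((\<lambda>h. (1/h) *\<^sub>R (u x h - x)) \<longlongrightarrow> l) (at_right 0)"
  shows "Q x \<in> gen_dom U"
proof -
  have "((\<lambda>h. (1/h) *\<^sub>R (u x h - x) + (1/h) *\<^sub>R integral {0..h} (\<lambda>s. f x (h - s) *\<^sub>C U s z))
      \<longlongrightarrow> l + f x 0 *\<^sub>C z) (at_right 0)"
    by (intro tendsto_add assms I_quot)
  then have "((\<lambda>h. (1/h) *\<^sub>R (U h (Q x) - Q x)) \<longlongrightarrow> l + f x 0 *\<^sub>C z) (at_right 0)"
    by (simp add: u_minus_x scaleR_diff_right)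
  then show ?thesis unfolding gen_dom_def by auto
qed

lemma gen_dom_u: "gen_dom (\<lambda>t x. u x t) = {x. Q x \<in> gen_dom U}"
proof
  show "gen_dom (\<lambda>t x. u x t) \<subseteq> {x. Q x \<in> gen_dom U}"
  proof
    fix x assume "x \<in> gen_dom (\<lambda>t x. u x t)"
    then obtain l where "((\<lambda>h. (1/h) *\<^sub>R (u x h - x)) \<longlongrightarrow> l) (at_right 0)"
      unfolding gen_dom_def mem_Collect_eq by blast
    then show "x \<in> {x. Q x \<in> gen_dom U}" using dom_u by blast
  qed
  show "{x. Q x \<in> gen_dom U} \<subseteq> gen_dom (\<lambda>t x. u x t)"
  proof
    fix x assume "x \<in> {x. Q x \<in> gen_dom U}"
    then have "((\<lambda>h. (1/h) *\<^sub>R (u x h - x)) \<longlongrightarrow> Q (gen U (Q x))) (at_right 0)"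
      using gen_u_lim by blast
    then show "x \<in> gen_dom (\<lambda>t x. u x t)" unfolding gen_dom_def mem_Collect_eq by blast
  qed
qed

lemma gen_u: "Q x \<in> gen_dom U \<Longrightarrow> gen (\<lambda>t x. u x t) x = Q (gen U (Q x))"
proof -
  assume d: "Q x \<in> gen_dom U"
  have l: "((\<lambda>h. (1/h) *\<^sub>R (u x h - x)) \<longlongrightarrow> Q (gen U (Q x))) (at_right 0)" by (rule gen_u_lim[OF d])
  have "Lim (at_right 0) (\<lambda>h. (1/h) *\<^sub>R (u x h - x)) = Q (gen U (Q x))"
    by (rule tendsto_Lim[OF trivial_limit_at_right_real l])
  then show ?thesis unfolding gen_def by simp
qed

lemma graph_closed: "closed (op_graph (gen_dom U) (\<lambda>x. Q (gen U x)))"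
  unfolding closed_sequential_limits
proof (intro allI impI, elim conjE)
  fix p :: "nat \<Rightarrow> 'a \<times> 'a" and l
  assume pin: "\<forall>n. p n \<in> op_graph (gen_dom U) (\<lambda>x. Q (gen U x))" and pl: "p \<longlonglongrightarrow> l"
  define a where "a n = fst (p n)" for n
  obtain la lb where l: "l = (la, lb)" by (cases l)
  have pn': "p n = (a n, Q (gen U (a n))) \<and> a n \<in> gen_dom U" for n
  proof -
    obtain y where "p n = (y, Q (gen U y))" "y \<in> gen_dom U" using pin unfolding op_graph_def by blast
    then show ?thesis by (simp add: a_def)
  qed
  have ad: "a n \<in> gen_dom U" and pn: "snd (p n) = Q (gen U (a n))" for n
    using pn'[of n] by (auto simp del: prod.collapse)
  have al: "a \<longlonglongrightarrow> la" unfolding a_def using tendsto_fst[OF pl] l by simp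
  have bl: "(\<lambda>n. Q (gen U (a n))) \<longlonglongrightarrow> lb" using tendsto_snd[OF pl] l pn by simp
  have Pg: "P (gen U (a n)) = (cinner (a n) w / cc) *\<^sub>C z" for n
    by (simp add: P_eq adjw[OF ad])
  have "(\<lambda>n. (cinner (a n) w / cc) *\<^sub>C z) \<longlonglongrightarrow> (cinner la w / cc) *\<^sub>C z"
    using cc_nz by (intro tendsto_intros al) auto
  then have "(\<lambda>n. Q (gen U (a n)) + P (gen U (a n))) \<longlonglongrightarrow> lb + (cinner la w / cc) *\<^sub>C z"
    unfolding Pg by (intro tendsto_add bl)
  then have gl: "(\<lambda>n. gen U (a n)) \<longlonglongrightarrow> lb + (cinner la w / cc) *\<^sub>C z"
    by (simp add: Q_eq)
  from gen_closed[OF ad al gl] have la: "la \<in> gen_dom U" "gen U la = lb + (cinner la w / cc) *\<^sub>C z" by auto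
  have "(\<lambda>n. P (Q (gen U (a n)))) \<longlonglongrightarrow> P lb"
    by (rule bounded_linear.tendsto[OF P_lin bl])
  then have "P lb = 0" by (simp add: PQ LIMSEQ_const_iff)
  then have "Q (gen U la) = lb"
    by (simp add: la(2) Q_add Q_mult_z) (simp add: Q_eq cc_nz)
  then show "l \<in> op_graph (gen_dom U) (\<lambda>x. Q (gen U x))"
    unfolding op_graph_def l using la(1) by auto
qed

lemma closure_graph: "closure (op_graph (gen_dom U) (\<lambda>x. Q (gen U x))) = op_graph (gen_dom U) (\<lambda>x. Q (gen U x))"
  using graph_closed closure_closed by blast

end

lemma int_reflect_shift:
  fixes q :: "real \<Rightarrow> 'b::banach"
  shows "integral {a..b} (\<lambda>r. q (c - r)) = integral {c - b..c - a} q"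
proof -
  have "integral {a..b} (\<lambda>r. q (c - r)) = integral {-b..-a} (\<lambda>x. q (c + x))"
    using Henstock_Kurzweil_Integration.integral_reflect_real[of b a "\<lambda>r. q (c - r)"] by simp
  also have "\<dots> = integral {-b + c..-a + c} q"
    using integral_shift_Icc_real[of "-b" "-a" q c] by (simp add: o_def)
  finally show ?thesis by simp
qed

lemma int_shift:
  fixes q :: "real \<Rightarrow> 'b::banach"
  shows "integral {a..b} (\<lambda>r. q (r - c)) = integral {a - c..b - c} q"
proof -
  have "integral {a - c..b - c} (q \<circ> (+) c) = integral {a - c + c..b - c + c} q"
    by (rule integral_shift_Icc_real)
  then have "integral {a - c..b - c} (\<lambda>r. q (c + r)) = integral {a..b} q" by (simp add: o_def)
  moreover have "integral {a..b} (\<lambda>r. q (r - c)) = integral {a - c..b - c} (\<lambda>r. q (r - c + c))"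
    using integral_shift_Icc_real[of "a - c" "b - c" "\<lambda>r. q (r - c)" c] by (simp add: o_def add.commute)
  ultimately show ?thesis by (simp add: add.commute)
qed

lemma int_split_shift:
  fixes F :: "real \<Rightarrow> 'b::banach"
  assumes s: "s \<ge> 0" and t: "t \<ge> 0" and F: "continuous_on {0..s+t} F"
  shows "integral {0..s+t} F = integral {0..s} F + integral {0..t} (\<lambda>r. F (s + r))"
proof -
  have "integral {0..s} F + integral {s..s+t} F = integral {0..s+t} F"
    by (rule Henstock_Kurzweil_Integration.integral_combine) (use s t F in \<open>auto intro: integrable_continuous_real\<close>)
  moreover have "integral {0..t} (F \<circ> (+) s) = integral {0+s..t+s} F"
    by (rule integral_shift_Icc_real)
  ultimately show ?thesis by (simp add: o_def add.commute)
qed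

lemma cont_ext_comp:
  fixes q :: "real \<Rightarrow> 'b::topological_space"
  assumes q: "continuous_on {0..} q" and k: "continuous_on S k"
  shows "continuous_on S (\<lambda>p. q (max 0 (k p)))"
  by (rule continuous_on_compose2[OF q]) (auto intro!: continuous_intros k)

lemma conv_sc_cont:
  fixes g m :: "real \<Rightarrow> complex"
  assumes g: "continuous_on {0..} g" and m: "continuous_on {0..} m"
  shows "continuous_on {0..} (\<lambda>s. integral {0..s} (\<lambda>r. g (s - r) * m r))"
proof -
  define G where "G s r = g (max 0 (s - r)) * m (max 0 r)" for s r
  have "continuous_on UNIV (\<lambda>p :: real \<times> real. g (max 0 (fst p - snd p)) * m (max 0 (snd p)))"
    by (intro continuous_intros cont_ext_comp[OF g] cont_ext_comp[OF m])
  then have Gc: "continuous_on UNIV (\<lambda>(s, r). G s r)" by (simp add: G_def case_prod_beta')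
  have "continuous_on {0..} (\<lambda>s. integral {0..s} (G s))" by (rule param_cont1[OF Gc])
  moreover have "integral {0..s} (G s) = integral {0..s} (\<lambda>r. g (s - r) * m r)" if "s \<in> {0..}" for s
    by (rule integral_cong) (simp add: G_def)
  ultimately show ?thesis using continuous_on_cong by (smt (verit, best))
qed

context pert
begin

lemma conv_vec_cont:
  fixes g :: "real \<Rightarrow> complex" and v :: "real \<Rightarrow> 'a"
  assumes g: "continuous_on {0..} g" and v: "continuous_on {0..} v"
  shows "continuous_on {0..} (\<lambda>s. integral {0..s} (\<lambda>r. g (s - r) *\<^sub>C v r))"
proof -
  define G where "G s r = g (max 0 (s - r)) *\<^sub>C v (max 0 r)" for s r
  have "continuous_on UNIV (\<lambda>p :: real \<times> real. g (max 0 (fst p - snd p)) *\<^sub>C v (max 0 (snd p)))"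
    by (intro continuous_intros cont_ext_comp[OF g] cont_ext_comp[OF v])
  then have Gc: "continuous_on UNIV (\<lambda>(s, r). G s r)" by (simp add: G_def case_prod_beta')
  have "continuous_on {0..} (\<lambda>s. integral {0..s} (G s))" by (rule param_cont1[OF Gc])
  moreover have "integral {0..s} (G s) = integral {0..s} (\<lambda>r. g (s - r) *\<^sub>C v r)" if "s \<in> {0..}" for s
    by (rule integral_cong) (simp add: G_def)
  ultimately show ?thesis using continuous_on_cong by (smt (verit, best))
qed

lemma yy_cont: "continuous_on {0..} (yy x)"
proof -
  have "continuous_on {0..} (\<lambda>s. integral {0..s} (\<lambda>r. f x (s - r) *\<^sub>C U r z))"
    by (rule conv_vec_cont[OF f_cont U_cont])
  then show ?thesis unfolding yy_def[abs_def] by (intro continuous_intros U_cont)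
qed

lemma E1: assumes t: "t \<ge> 0"
  shows "cinner (U t b) z = cinner b z + integral {0..t} (\<lambda>\<sigma>. cinner (U \<sigma> b) w)"
proof -
  have d: "J t b \<in> gen_dom U" "gen U (J t b) = U t b - b" using J_dom[OF t] by auto
  have "cinner (U t b - b) z = cinner (J t b) w" using adjw[OF d(1)] d(2) by simp
  also have "cinner (J t b) w = integral {0..t} ((\<lambda>v. cinner v w) \<circ> (\<lambda>\<sigma>. U \<sigma> b))"
    unfolding J_def by (rule integral_linear[symmetric]) (use t in \<open>auto intro: U_integrable bounded_linear_cinner_left\<close>)
  finally show ?thesis by (simp add: cinner_diff_left o_def algebra_simps)
qed

lemma int_U_comm:
  fixes c :: "real \<Rightarrow> complex"
  assumes s: "s \<ge> 0" and t: "t \<ge> 0" and c: "continuous_on {0..t} c"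
  shows "U s (integral {0..t} (\<lambda>r. c r *\<^sub>C U r z)) = integral {0..t} (\<lambda>r. c r *\<^sub>C U (s + r) z)"
proof -
  have "U s (integral {0..t} (\<lambda>r. c r *\<^sub>C U r z)) = integral {0..t} (U s \<circ> (\<lambda>r. c r *\<^sub>C U r z))"
    by (rule integral_linear[symmetric])
      (use s t in \<open>auto intro!: integrable_continuous_real continuous_intros c U_cont_on U_lin\<close>)
  also have "\<dots> = integral {0..t} (\<lambda>r. c r *\<^sub>C U (s + r) z)"
    by (rule integral_cong) (use s in \<open>simp add: U_scaleC U_comp\<close>)
  finally show ?thesis .
qed

lemma int_phi_comm:
  fixes c :: "real \<Rightarrow> complex" and v :: "real \<Rightarrow> 'a"
  assumes t: "t \<ge> 0" and c: "continuous_on {0..t} c" and v: "continuous_on {0..t} v"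
  shows "phi (integral {0..t} (\<lambda>r. c r *\<^sub>C v r)) = integral {0..t} (\<lambda>r. c r * phi (v r))"
proof -
  have "phi (integral {0..t} (\<lambda>r. c r *\<^sub>C v r)) = integral {0..t} (phi \<circ> (\<lambda>r. c r *\<^sub>C v r))"
    by (rule integral_linear[symmetric]) (auto intro!: integrable_continuous_real continuous_intros c v phi_lin)
  then show ?thesis by (simp add: o_def phi_scaleC)
qed

lemma f_phi_yy: assumes s: "s \<ge> 0" shows "f x s = phi (yy x s)"
proof -
  have "phi (integral {0..s} (\<lambda>r. f x (s - r) *\<^sub>C U r z)) = integral {0..s} (\<lambda>r. f x (s - r) * phi (U r z))"
    by (rule int_phi_comm[OF s]) (auto intro: cont_flip[OF f_cont s] U_cont_on)
  then have "phi (integral {0..s} (\<lambda>r. f x (s - r) *\<^sub>C U r z)) = conv (f x) s"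
    by (simp add: conv_def kk_def)
  then show ?thesis using f_eq[OF s, of x] by (simp add: yy_def phi_diff)
qed

end

context pert
begin

lemma orth: assumes t: "t \<ge> 0" shows "cinner (yy x t) z = 0"
proof -
  define g where "g = f x"
  define mw where "mw r = cinner (U r z) w" for r
  define Gg where "Gg s = integral {0..s} g" for s
  define Mw where "Mw r = integral {0..r} mw" for r
  define Cw where "Cw s = integral {0..s} (\<lambda>r. g (s - r) * mw r)" for s
  define h where "h \<sigma> = cinner (yy x \<sigma>) z" for \<sigma>
  define \<kappa> where "\<kappa> = cnj (cinner w z / cc)"
  have gc: "continuous_on {0..} g" unfolding g_def by (rule f_cont)
  have mwc: "continuous_on {0..} mw" unfolding mw_def[abs_def] by (intro continuous_intros U_cont)
  have Cwc: "continuous_on {0..} Cw" unfolding Cw_def[abs_def] by (rule conv_sc_cont[OF gc mwc])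
  have yc: "continuous_on {0..} (yy x)" by (rule yy_cont)
  have hc: "continuous_on {0..} h" unfolding h_def[abs_def] by (intro continuous_intros yc)
  have Mwc: "continuous_on {0..t'} Mw" if "t' \<ge> 0" for t'
    unfolding Mw_def[abs_def]
    by (rule indefinite_integral_continuous_1, rule integrable_continuous_real)
      (use that in \<open>auto intro: continuous_on_subset[OF mwc]\<close>)
  have stepA: "integral {0..\<tau>} (\<lambda>r. g (\<tau> - r) * Mw r) = integral {0..\<tau>} Cw" if \<tau>: "\<tau> \<ge> 0" for \<tau>
  proof -
    define F1 where "F1 r \<sigma> = g (max 0 (\<tau> - r)) * mw (max 0 \<sigma>)" for r \<sigma>
    define F2 where "F2 s r = g (max 0 (s - r)) * mw (max 0 r)" for s r
    have "continuous_on UNIV (\<lambda>p :: real \<times> real. g (max 0 (\<tau> - fst p)) * mw (max 0 (snd p)))"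
      by (intro continuous_intros cont_ext_comp[OF gc] cont_ext_comp[OF mwc])
    then have F1c: "continuous_on UNIV (\<lambda>(r, \<sigma>). F1 r \<sigma>)" by (simp add: F1_def case_prod_beta')
    have "continuous_on UNIV (\<lambda>p :: real \<times> real. g (max 0 (fst p - snd p)) * mw (max 0 (snd p)))"
      by (intro continuous_intros cont_ext_comp[OF gc] cont_ext_comp[OF mwc])
    then have F2c: "continuous_on UNIV (\<lambda>(s, r). F2 s r)" by (simp add: F2_def case_prod_beta')
    have "integral {0..\<tau>} (\<lambda>r. g (\<tau> - r) * Mw r) = integral {0..\<tau>} (\<lambda>r. integral {0..r} (\<lambda>\<sigma>. F1 r \<sigma>))"
    proof (rule integral_cong)
      fix r assume r: "r \<in> {0..\<tau>}"
      have "g (\<tau> - r) * Mw r = integral {0..r} (\<lambda>\<sigma>. g (\<tau> - r) * mw \<sigma>)"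
        by (simp add: Mw_def)
      also have "\<dots> = integral {0..r} (\<lambda>\<sigma>. F1 r \<sigma>)"
        by (rule integral_cong) (use r in \<open>simp add: F1_def\<close>)
      finally show "g (\<tau> - r) * Mw r = integral {0..r} (\<lambda>\<sigma>. F1 r \<sigma>)" .
    qed
    also have "\<dots> = integral {0..\<tau>} (\<lambda>\<sigma>. integral {\<sigma>..\<tau>} (\<lambda>r. F1 r \<sigma>))"
      by (rule fubini_tri[OF F1c \<tau>])
    also have "\<dots> = integral {0..\<tau>} (\<lambda>\<sigma>. Gg (\<tau> - \<sigma>) * mw \<sigma>)"
    proof (rule integral_cong)
      fix \<sigma> assume \<sigma>: "\<sigma> \<in> {0..\<tau>}"
      have "integral {\<sigma>..\<tau>} (\<lambda>r. F1 r \<sigma>) = integral {\<sigma>..\<tau>} (\<lambda>r. g (\<tau> - r) * mw \<sigma>)"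
        by (rule integral_cong) (use \<sigma> in \<open>simp add: F1_def\<close>)
      also have "\<dots> = integral {\<sigma>..\<tau>} (\<lambda>r. g (\<tau> - r)) * mw \<sigma>"
        by simp
      also have "integral {\<sigma>..\<tau>} (\<lambda>r. g (\<tau> - r)) = Gg (\<tau> - \<sigma>)"
        unfolding Gg_def using int_reflect_shift[of \<sigma> \<tau> g \<tau>] by simp
      finally show "integral {\<sigma>..\<tau>} (\<lambda>r. F1 r \<sigma>) = Gg (\<tau> - \<sigma>) * mw \<sigma>" .
    qed
    finally have L: "integral {0..\<tau>} (\<lambda>r. g (\<tau> - r) * Mw r) = integral {0..\<tau>} (\<lambda>\<sigma>. Gg (\<tau> - \<sigma>) * mw \<sigma>)" .
    have "integral {0..\<tau>} Cw = integral {0..\<tau>} (\<lambda>s. integral {0..s} (\<lambda>r. F2 s r))"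
    proof (rule integral_cong)
      fix s assume s: "s \<in> {0..\<tau>}"
      show "Cw s = integral {0..s} (\<lambda>r. F2 s r)"
        unfolding Cw_def by (rule integral_cong) (use s in \<open>simp add: F2_def\<close>)
    qed
    also have "\<dots> = integral {0..\<tau>} (\<lambda>r. integral {r..\<tau>} (\<lambda>s. F2 s r))"
      by (rule fubini_tri[OF F2c \<tau>])
    also have "\<dots> = integral {0..\<tau>} (\<lambda>\<sigma>. Gg (\<tau> - \<sigma>) * mw \<sigma>)"
    proof (rule integral_cong)
      fix r assume r: "r \<in> {0..\<tau>}"
      have "integral {r..\<tau>} (\<lambda>s. F2 s r) = integral {r..\<tau>} (\<lambda>s. g (s - r) * mw r)"
        by (rule integral_cong) (use r in \<open>simp add: F2_def\<close>)
      also have "\<dots> = integral {r..\<tau>} (\<lambda>s. g (s - r)) * mw r"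
        by simp
      also have "integral {r..\<tau>} (\<lambda>s. g (s - r)) = Gg (\<tau> - r)"
        unfolding Gg_def using int_shift[of r \<tau> g r] by simp
      finally show "integral {r..\<tau>} (\<lambda>s. F2 s r) = Gg (\<tau> - r) * mw r" .
    qed
    finally show ?thesis using L by simp
  qed
  have stepB: "h \<tau> = integral {0..\<tau>} (\<lambda>\<sigma>. cinner (U \<sigma> (Q x)) w) - (cc * Gg \<tau> + integral {0..\<tau>} Cw)"
    if \<tau>: "\<tau> \<ge> 0" for \<tau>
  proof -
    have "cinner (integral {0..\<tau>} (\<lambda>r. f x (\<tau> - r) *\<^sub>C U r z)) z
        = integral {0..\<tau>} ((\<lambda>v. cinner v z) \<circ> (\<lambda>r. f x (\<tau> - r) *\<^sub>C U r z))"
      by (rule integral_linear[symmetric]) (rule I_int[OF \<tau>], rule bounded_linear_cinner_left)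
    also have "\<dots> = integral {0..\<tau>} (\<lambda>r. g (\<tau> - r) * (cc + Mw r))"
    proof (rule integral_cong)
      fix r assume r: "r \<in> {0..\<tau>}"
      have "cinner (U r z) z = cc + Mw r"
        using E1[of r z] r by (simp add: cc_def Mw_def mw_def[abs_def])
      then show "((\<lambda>v. cinner v z) \<circ> (\<lambda>r. f x (\<tau> - r) *\<^sub>C U r z)) r = g (\<tau> - r) * (cc + Mw r)"
        by (simp add: cinner_scaleC_left g_def)
    qed
    also have "\<dots> = integral {0..\<tau>} (\<lambda>r. cc * g (\<tau> - r) + g (\<tau> - r) * Mw r)"
      by (simp add: algebra_simps)
    also have "\<dots> = integral {0..\<tau>} (\<lambda>r. cc * g (\<tau> - r)) + integral {0..\<tau>} (\<lambda>r. g (\<tau> - r) * Mw r)"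
      by (rule integral_add)
        (use \<tau> in \<open>auto intro!: integrable_continuous_real continuous_intros cont_flip[OF gc] Mwc\<close>)
    also have "integral {0..\<tau>} (\<lambda>r. cc * g (\<tau> - r)) = cc * Gg \<tau>"
      using integral_flip[where h=g and t=\<tau>] by (simp add: Gg_def)
    finally have i: "cinner (integral {0..\<tau>} (\<lambda>r. f x (\<tau> - r) *\<^sub>C U r z)) z = cc * Gg \<tau> + integral {0..\<tau>} Cw"
      using stepA[OF \<tau>] by simp
    have "cinner (U \<tau> (Q x)) z = integral {0..\<tau>} (\<lambda>\<sigma>. cinner (U \<sigma> (Q x)) w)"
      using E1[OF \<tau>, of "Q x"] by (simp add: Qz)
    then show ?thesis using i by (simp add: h_def yy_def cinner_diff_left)
  qed
  have stepC: "integral {0..\<tau>} (\<lambda>s. cinner (yy x s) w) = integral {0..\<tau>} (\<lambda>\<sigma>. cinner (U \<sigma> (Q x)) w) - integral {0..\<tau>} Cw"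
    if \<tau>: "\<tau> \<ge> 0" for \<tau>
  proof -
    have "integral {0..\<tau>} (\<lambda>s. cinner (yy x s) w) = integral {0..\<tau>} (\<lambda>s. cinner (U s (Q x)) w - Cw s)"
    proof (rule integral_cong)
      fix s assume s: "s \<in> {0..\<tau>}"
      have "cinner (integral {0..s} (\<lambda>r. f x (s - r) *\<^sub>C U r z)) w
          = integral {0..s} ((\<lambda>v. cinner v w) \<circ> (\<lambda>r. f x (s - r) *\<^sub>C U r z))"
        by (rule integral_linear[symmetric]) (use s in \<open>auto intro: I_int bounded_linear_cinner_left\<close>)
      also have "\<dots> = Cw s"
        unfolding Cw_def by (rule integral_cong) (simp add: cinner_scaleC_left g_def mw_def)
      finally show "cinner (yy x s) w = cinner (U s (Q x)) w - Cw s"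
        by (simp add: yy_def cinner_diff_left)
    qed
    also have "\<dots> = integral {0..\<tau>} (\<lambda>\<sigma>. cinner (U \<sigma> (Q x)) w) - integral {0..\<tau>} Cw"
      by (rule integral_diff)
        (use \<tau> in \<open>auto intro!: integrable_continuous_real continuous_intros U_cont_on continuous_on_subset[OF Cwc]\<close>)
    finally show ?thesis .
  qed
  have stepD: "integral {0..\<tau>} (\<lambda>s. cinner (yy x s) (Q w)) = cc * Gg \<tau>" if \<tau>: "\<tau> \<ge> 0" for \<tau>
  proof -
    have "integral {0..\<tau>} (\<lambda>s. cinner (yy x s) (Q w)) = integral {0..\<tau>} (\<lambda>s. cc * g s)"
    proof (rule integral_cong)
      fix s assume s: "s \<in> {0..\<tau>}"
      then have "g s = cinner (yy x s) (Q w) / cc" using f_phi_yy[of s x] by (simp add: g_def phi_def)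
      then show "cinner (yy x s) (Q w) = cc * g s" using cc_nz by simp
    qed
    then show ?thesis by (simp add: Gg_def)
  qed
  have stepE: "h \<tau> = \<kappa> * integral {0..\<tau>} h" if \<tau>: "\<tau> \<ge> 0" for \<tau>
  proof -
    have ic: "continuous_on {0..\<tau>} (\<lambda>s. cinner (yy x s) v)" for v
      by (intro continuous_intros continuous_on_subset[OF yc]) auto
    have "integral {0..\<tau>} (\<lambda>s. cinner (yy x s) (P w))
        = integral {0..\<tau>} (\<lambda>s. cinner (yy x s) w - cinner (yy x s) (Q w))"
      by (rule integral_cong) (simp add: Q_eq cinner_diff_right)
    also have "\<dots> = integral {0..\<tau>} (\<lambda>s. cinner (yy x s) w) - integral {0..\<tau>} (\<lambda>s. cinner (yy x s) (Q w))"
      by (rule integral_diff) (auto intro: integrable_continuous_real ic)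
    also have "\<dots> = h \<tau>"
      unfolding stepB[OF \<tau>] stepC[OF \<tau>] stepD[OF \<tau>] by (simp add: algebra_simps)
    finally have e1: "h \<tau> = integral {0..\<tau>} (\<lambda>s. cinner (yy x s) (P w))" by simp
    have "integral {0..\<tau>} (\<lambda>s. cinner (yy x s) (P w)) = integral {0..\<tau>} (\<lambda>s. \<kappa> * h s)"
      by (rule integral_cong) (simp add: P_eq cinner_scaleC_right \<kappa>_def h_def)
    then show ?thesis using e1 by simp
  qed
  have "cmod (h t) \<le> 0 * exp (cmod \<kappa> * t)"
  proof (rule gronwall[where T=t])
    show "continuous_on {0..t} (\<lambda>r. cmod (h r))"
      by (intro continuous_intros continuous_on_subset[OF hc]) auto
    fix s assume s: "s \<in> {0..t}"
    have "cmod (h s) = cmod \<kappa> * cmod (integral {0..s} h)" using stepE[of s] s by (simp add: norm_mult)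
    also have "cmod (integral {0..s} h) \<le> integral {0..s} (\<lambda>r. cmod (h r))"
      by (rule integral_norm_bound_integral)
        (use s in \<open>auto intro!: integrable_continuous_real continuous_intros continuous_on_subset[OF hc]\<close>)
    finally show "cmod (h s) \<le> 0 + cmod \<kappa> * integral {0..s} (\<lambda>r. cmod (h r))"
      by (simp add: mult_left_mono)
  qed (use t in auto)
  then show ?thesis by (simp add: h_def)
qed

end

context pert
begin

lemma P_yy: "t \<ge> 0 \<Longrightarrow> P (yy x t) = 0"
  by (simp add: P_eq orth)

lemma Q_u: "t \<ge> 0 \<Longrightarrow> Q (u x t) = yy x t"
proof -
  assume t: "t \<ge> 0"
  have "Q (P x) = 0" by (simp add: P_eq Q_mult_z)
  moreover have "Q (yy x t) = yy x t" using P_yy[OF t] by (simp add: Q_eq)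
  ultimately show ?thesis by (simp add: u_eq Q_add)
qed

lemma P_u: "t \<ge> 0 \<Longrightarrow> P (u x t) = P x"
  by (simp add: u_eq P_add PP P_yy)

lemma f_shift: assumes s: "s \<ge> 0" and t: "t \<ge> 0" shows "f (u x t) s = f x (s + t)"
proof -
  have ft: "continuous_on {0..} (\<lambda>\<sigma>. f x (\<sigma> + t))"
    by (rule continuous_on_compose2[OF f_cont[of x]]) (use t in \<open>auto intro!: continuous_intros\<close>)
  define d where "d \<sigma> = f (u x t) \<sigma> - f x (\<sigma> + t)" for \<sigma>
  have dc: "continuous_on {0..} d" unfolding d_def[abs_def] by (intro continuous_intros f_cont ft)
  have "d \<tau> = - conv d \<tau>" if \<tau>: "\<tau> \<ge> 0" for \<tau>
  proof -
    have A1: "f (u x t) \<tau> = phi (U \<tau> (yy x t)) - conv (f (u x t)) \<tau>"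
      using f_eq[OF \<tau>, of "u x t"] Q_u[OF t] by simp
    have cI: "continuous_on {0..t} (\<lambda>r. f x (t - r))" by (rule cont_flip[OF f_cont t])
    have "conv (f x) (\<tau> + t) = integral {0..\<tau>} (\<lambda>r. f x (\<tau> + t - r) * kk r) + integral {0..t} (\<lambda>r. f x (\<tau> + t - (\<tau> + r)) * kk (\<tau> + r))"
      unfolding conv_def
      by (rule int_split_shift[OF \<tau> t])
        (use \<tau> t in \<open>auto intro!: continuous_intros cont_flip[OF f_cont] continuous_on_subset[OF kk_cont]\<close>)
    also have "integral {0..\<tau>} (\<lambda>r. f x (\<tau> + t - r) * kk r) = conv (\<lambda>\<sigma>. f x (\<sigma> + t)) \<tau>"
      unfolding conv_def by (rule integral_cong) (simp add: algebra_simps)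
    finally have c1: "conv (f x) (\<tau> + t) = conv (\<lambda>\<sigma>. f x (\<sigma> + t)) \<tau> + integral {0..t} (\<lambda>r. f x (t - r) * kk (\<tau> + r))"
      by simp
    have "phi (U \<tau> (yy x t)) = phi (U (\<tau> + t) (Q x)) - phi (U \<tau> (integral {0..t} (\<lambda>r. f x (t - r) *\<^sub>C U r z)))"
      using \<tau> t by (simp add: yy_def U_diff U_comp phi_diff)
    also have "U \<tau> (integral {0..t} (\<lambda>r. f x (t - r) *\<^sub>C U r z)) = integral {0..t} (\<lambda>r. f x (t - r) *\<^sub>C U (\<tau> + r) z)"
      by (rule int_U_comm[OF \<tau> t cI])
    also have "phi \<dots> = integral {0..t} (\<lambda>r. f x (t - r) * kk (\<tau> + r))"
      unfolding kk_def by (rule int_phi_comm[OF t cI], rule continuous_on_compose2[OF U_cont[of z]])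
        (use \<tau> in \<open>auto intro!: continuous_intros\<close>)
    finally have A2: "f x (\<tau> + t) = phi (U \<tau> (yy x t)) - conv (\<lambda>\<sigma>. f x (\<sigma> + t)) \<tau>"
      using f_eq[of "\<tau> + t" x] \<tau> t c1 by simp
    have "conv d \<tau> = conv (f (u x t)) \<tau> - conv (\<lambda>\<sigma>. f x (\<sigma> + t)) \<tau>"
      unfolding d_def by (rule conv_diff[OF f_cont ft \<tau>])
    then show ?thesis using A1 A2 by (simp add: d_def)
  qed
  then have "d s = 0" using volterra_zero[OF dc] s by blast
  then show ?thesis by (simp add: d_def)
qed

lemma semigroup: assumes s: "s \<ge> 0" and t: "t \<ge> 0" shows "u (u x t) s = u x (s + t)"
proof -
  have cI: "continuous_on {0..t} (\<lambda>r. f x (t - r))" by (rule cont_flip[OF f_cont t])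
  have i1: "integral {0..s} (\<lambda>r. f (u x t) (s - r) *\<^sub>C U r z) = integral {0..s} (\<lambda>r. f x (s + t - r) *\<^sub>C U r z)"
    by (rule integral_cong) (use t in \<open>simp add: f_shift algebra_simps\<close>)
  have "integral {0..s+t} (\<lambda>r. f x (s + t - r) *\<^sub>C U r z)
      = integral {0..s} (\<lambda>r. f x (s + t - r) *\<^sub>C U r z) + integral {0..t} (\<lambda>r. f x (s + t - (s + r)) *\<^sub>C U (s + r) z)"
    by (rule int_split_shift[OF s t])
      (use s t in \<open>auto intro!: continuous_intros cont_flip[OF f_cont] U_cont_on\<close>)
  then have i2: "integral {0..s+t} (\<lambda>r. f x (s + t - r) *\<^sub>C U r z)
      = integral {0..s} (\<lambda>r. f x (s + t - r) *\<^sub>C U r z) + integral {0..t} (\<lambda>r. f x (t - r) *\<^sub>C U (s + r) z)"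
    by simp
  have i3: "U s (yy x t) = U (s + t) (Q x) - integral {0..t} (\<lambda>r. f x (t - r) *\<^sub>C U (s + r) z)"
    using s t int_U_comm[OF s t cI] by (simp add: yy_def U_diff U_comp)
  have "u (u x t) s = P (u x t) + yy (u x t) s" by (rule u_eq)
  also have "\<dots> = P x + (U s (yy x t) - integral {0..s} (\<lambda>r. f (u x t) (s - r) *\<^sub>C U r z))"
    by (simp add: P_u[OF t] Q_u[OF t] yy_def)
  also have "\<dots> = P x + U s (yy x t) - integral {0..s} (\<lambda>r. f x (s + t - r) *\<^sub>C U r z)"
    by (simp add: i1 algebra_simps)
  also have "\<dots> = u x (s + t)"
    by (simp add: u_def i2 i3 algebra_simps)
  finally show ?thesis .
qed

lemma u_semigroup: "c0_semigroup (\<lambda>t x. u x t)"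
  unfolding c0_semigroup_def
proof (intro conjI allI impI)
  show "bounded_clin (\<lambda>x. u x t)" if "t \<ge> 0" for t using u_clin that by blast
  show "(\<lambda>x. u x 0) = id" by (simp add: fun_eq_iff u_0)
  show "(\<lambda>x. u x (s + t)) = (\<lambda>x. u x s) \<circ> (\<lambda>x. u x t)" if "s \<ge> 0" "t \<ge> 0" for s t
    using semigroup that by (simp add: fun_eq_iff)
  show "((\<lambda>t. u x t) \<longlongrightarrow> x) (at_right 0)" for x by (rule u_cont0)
qed

end

theorem corollary3:
  fixes U :: "real \<Rightarrow> 'a::complex_hilbert \<Rightarrow> 'a"
    and z w :: 'a
    and P Q :: "'a \<Rightarrow> 'a"
    and f :: "'a \<Rightarrow> real \<Rightarrow> complex"
    and u :: "'a \<Rightarrow> real \<Rightarrow> 'a"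
  assumes U: "c0_semigroup U"
    and z: "z \<in> adj_dom (gen_dom U) (gen U)" "z \<noteq> 0"
    and w: "w = adj (gen_dom U) (gen U) z"
    and P: "P = (\<lambda>x. (cinner x z / cinner z z) *\<^sub>C z)"
    and Q: "Q = (\<lambda>x. x - P x)"
    and f_cont: "\<And>x. continuous_on {0..} (f x)"
    and f_eq: "\<And>x t. t \<ge> 0 \<Longrightarrow>
        f x t = cinner (U t (Q x)) (Q w) / cinner z z
              - integral {0..t} (\<lambda>s. f x (t - s) * (cinner (U s z) (Q w) / cinner z z))"
    and u: "u = (\<lambda>x t. P x + U t (Q x) - integral {0..t} (\<lambda>s. f x (t - s) *\<^sub>C U s z))"
  shows "closable (gen_dom U) (\<lambda>x. Q (gen U x))
    \<and> {x. Q x \<in> op_closure_dom (gen_dom U) (\<lambda>x. Q (gen U x))} = {x. Q x \<in> gen_dom U}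
    \<and> (\<forall>x. Q x \<in> gen_dom U \<longrightarrow> op_closure (gen_dom U) (\<lambda>x. Q (gen U x)) (Q x) = Q (gen U (Q x)))
    \<and> c0_semigroup (\<lambda>t x. u x t)
    \<and> gen_dom (\<lambda>t x. u x t) = {x. Q x \<in> gen_dom U}
    \<and> (\<forall>x. Q x \<in> gen_dom U \<longrightarrow> gen (\<lambda>t x. u x t) x = Q (gen U (Q x)))"
proof -
  interpret pert U z w P Q f u
    by (intro pert.intro c0sg.intro pert_axioms.intro) (use assms in auto)
  have cl: "closure (op_graph (gen_dom U) (\<lambda>x. Q (gen U x))) = op_graph (gen_dom U) (\<lambda>x. Q (gen U x))"
    by (rule closure_graph)
  have mem: "(a, b) \<in> op_graph (gen_dom U) (\<lambda>x. Q (gen U x)) \<longleftrightarrow> a \<in> gen_dom U \<and> b = Q (gen U a)" for a b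
    unfolding op_graph_def by auto
  have c1: "closable (gen_dom U) (\<lambda>x. Q (gen U x))"
    unfolding closable_def cl mem by auto
  have dom: "op_closure_dom (gen_dom U) (\<lambda>x. Q (gen U x)) = gen_dom U"
    unfolding op_closure_dom_def cl mem by auto
  have c3: "op_closure (gen_dom U) (\<lambda>x. Q (gen U x)) (Q x) = Q (gen U (Q x))" if "Q x \<in> gen_dom U" for x
    unfolding op_closure_def cl mem using that by auto
  show ?thesis
    using c1 dom c3 u_semigroup gen_dom_u gen_u by auto
qed

end
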